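(* Let $G$ and $H$ be connected graphs, each with at least $2$ vertices. The direct product $G\times H$ is $1$-perfectly orientable if and only if one of the following holds: (i) $G\cong K_2$ and $H$ is a pseudotree, or vice versa; (ii) $G\cong P_3$ and $H\cong P_4$, or vice versa; (iii) $G\cong H\cong P_3$.
   Context: All graphs are finite and simple. An orientation of a graph $G$ is $1$-perfect if the out-neighborhood of every vertex induces a clique in $G$; $G$ is $1$-perfectly orientable if it admits a $1$-perfect orientation. The direct product $G\times H$ has vertex set $V(G)\times V(H)$, with $(u,v),(u',v')$ adjacent iff $uu'\in E(G)$ and $vv'\in E(H)$. A pseudotree is a connected graph containing at most one cycle. $P_n$ denotes the path on $n$ vertices. *)

theory Defs
  imports Main
begin

definition graph :: "'a set \<Rightarrow> ('a \<Rightarrow> 'a \<Rightarrow> bool) \<Rightarrow> bool" where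
  "graph V E \<longleftrightarrow> finite V \<and> (\<forall>x y. E x y \<longrightarrow> x \<in> V \<and> y \<in> V)
     \<and> (\<forall>x y. E x y \<longrightarrow> E y x) \<and> (\<forall>x. \<not> E x x)"

definition connected_graph :: "'a set \<Rightarrow> ('a \<Rightarrow> 'a \<Rightarrow> bool) \<Rightarrow> bool" where
  "connected_graph V E \<longleftrightarrow> (\<forall>x\<in>V. \<forall>y\<in>V. E\<^sup>*\<^sup>* x y)"

text \<open>An orientation: each edge gets exactly one direction; D x y means arc x \<rightarrow> y.\<close>
definition orientation :: "'a set \<Rightarrow> ('a \<Rightarrow> 'a \<Rightarrow> bool) \<Rightarrow> ('a \<Rightarrow> 'a \<Rightarrow> bool) \<Rightarrow> bool" where
  "orientation V E D \<longleftrightarrow> (\<forall>x y. D x y \<longrightarrow> E x y) \<and>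
     (\<forall>x y. E x y \<longrightarrow> (D x y \<longleftrightarrow> \<not> D y x))"

definition one_perfect :: "'a set \<Rightarrow> ('a \<Rightarrow> 'a \<Rightarrow> bool) \<Rightarrow> ('a \<Rightarrow> 'a \<Rightarrow> bool) \<Rightarrow> bool" where
  "one_perfect V E D \<longleftrightarrow> orientation V E D \<and>
     (\<forall>v\<in>V. \<forall>x y. D v x \<and> D v y \<and> x \<noteq> y \<longrightarrow> E x y)"

definition one_perfectly_orientable :: "'a set \<Rightarrow> ('a \<Rightarrow> 'a \<Rightarrow> bool) \<Rightarrow> bool" where
  "one_perfectly_orientable V E \<longleftrightarrow> (\<exists>D. one_perfect V E D)"

definition dprod_V :: "'a set \<Rightarrow> 'b set \<Rightarrow> ('a \<times> 'b) set" where
  "dprod_V V1 V2 = V1 \<times> V2"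

definition dprod_E :: "('a \<Rightarrow> 'a \<Rightarrow> bool) \<Rightarrow> ('b \<Rightarrow> 'b \<Rightarrow> bool) \<Rightarrow> ('a \<times> 'b) \<Rightarrow> ('a \<times> 'b) \<Rightarrow> bool" where
  "dprod_E E1 E2 p q \<longleftrightarrow> E1 (fst p) (fst q) \<and> E2 (snd p) (snd q)"

definition graph_iso :: "'a set \<Rightarrow> ('a \<Rightarrow> 'a \<Rightarrow> bool) \<Rightarrow> 'b set \<Rightarrow> ('b \<Rightarrow> 'b \<Rightarrow> bool) \<Rightarrow> bool" where
  "graph_iso V1 E1 V2 E2 \<longleftrightarrow> (\<exists>f. bij_betw f V1 V2 \<and>
     (\<forall>x\<in>V1. \<forall>y\<in>V1. E1 x y \<longleftrightarrow> E2 (f x) (f y)))"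

definition path_V :: "nat \<Rightarrow> nat set" where
  "path_V n = {0..<n}"

definition path_E :: "nat \<Rightarrow> nat \<Rightarrow> nat \<Rightarrow> bool" where
  "path_E n i j \<longleftrightarrow> i < n \<and> j < n \<and> (i + 1 = j \<or> j + 1 = i)"

definition K2_V :: "nat set" where "K2_V = {0, 1}"
definition K2_E :: "nat \<Rightarrow> nat \<Rightarrow> bool" where
  "K2_E i j \<longleftrightarrow> i \<in> K2_V \<and> j \<in> K2_V \<and> i \<noteq> j"

text \<open>A cycle is given by a list of k \<ge> 3 distinct vertices, consecutive ones
  (cyclically) adjacent; it is identified with its edge set.\<close>
definition is_cycle :: "('a \<Rightarrow> 'a \<Rightarrow> bool) \<Rightarrow> 'a list \<Rightarrow> bool" where
  "is_cycle E c \<longleftrightarrow> length c \<ge> 3 \<and> distinct c \<and>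
     (\<forall>i < length c. E (c ! i) (c ! ((i + 1) mod length c)))"

definition cycle_edges :: "'a list \<Rightarrow> 'a set set" where
  "cycle_edges c = {{c ! i, c ! ((i + 1) mod length c)} | i. i < length c}"

definition pseudotree :: "'a set \<Rightarrow> ('a \<Rightarrow> 'a \<Rightarrow> bool) \<Rightarrow> bool" where
  "pseudotree V E \<longleftrightarrow> connected_graph V E \<and>
     (\<forall>c1 c2. is_cycle E c1 \<and> is_cycle E c2 \<longrightarrow> cycle_edges c1 = cycle_edges c2)"

end

theory Submission
  imports Defs
begin

lemma graph_dprod:
  assumes "graph V1 E1" "graph V2 E2"
  shows "graph (dprod_V V1 V2) (dprod_E E1 E2)"
  using assms unfolding graph_def dprod_V_def dprod_E_def by auto

lemma count_tf:
  assumes g: "graph V E" and op: "one_perfect V E D" and SV: "S \<subseteq> V"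
    and tf: "\<forall>x\<in>S. \<forall>y\<in>S. \<forall>z\<in>S. \<not>(E x y \<and> E y z \<and> E x z)"
  shows "card {(x,y). x\<in>S \<and> y\<in>S \<and> E x y} \<le> 2 * card S"
proof -
  have finS: "finite S" using g SV unfolding graph_def by (meson finite_subset)
  define DS where "DS = {(x,y). x\<in>S \<and> y\<in>S \<and> D x y}"
  have or: "orientation V E D" and pf: "\<forall>v\<in>V. \<forall>x y. D v x \<and> D v y \<and> x \<noteq> y \<longrightarrow> E x y"
    using op unfolding one_perfect_def by auto
  have DE: "\<And>x y. D x y \<Longrightarrow> E x y" using or unfolding orientation_def by auto
  have eq: "{(x,y). x\<in>S \<and> y\<in>S \<and> E x y} \<subseteq> DS \<union> converse DS"
    using or unfolding orientation_def DS_def by auto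
  have finDS: "finite DS" unfolding DS_def
    by (rule finite_subset[of _ "S \<times> S"]) (auto simp: finS)
  have "card {(x,y). x\<in>S \<and> y\<in>S \<and> E x y} \<le> card (DS \<union> converse DS)"
    by (rule card_mono) (use finDS eq in auto)
  also have "\<dots> \<le> card DS + card (converse DS)" by (rule card_Un_le)
  also have "\<dots> = 2 * card DS" by (simp add: card_inverse)
  also have "card DS \<le> card S"
  proof -
    have "inj_on fst DS"
    proof (rule inj_onI)
      fix a b assume a: "a \<in> DS" and b: "b \<in> DS" and f: "fst a = fst b"
      obtain x y where axy: "a = (x,y)" by force
      obtain z where bz: "b = (x,z)" using f axy by (cases b) auto
      show "a = b"
      proof (rule ccontr)
        assume "a \<noteq> b" then have "y \<noteq> z" using axy bz by auto
        moreover have "D x y" "D x z" "x \<in> S" "y \<in> S" "z \<in> S" using a b axy bz DS_def by auto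
        ultimately have "E y z" using pf SV by blast
        with \<open>D x y\<close> \<open>D x z\<close> DE tf \<open>x\<in>S\<close> \<open>y\<in>S\<close> \<open>z\<in>S\<close> show False by blast
      qed
    qed
    then have "card DS = card (fst ` DS)" by (simp add: card_image)
    also have "\<dots> \<le> card S" by (rule card_mono[OF finS]) (auto simp: DS_def)
    finally show ?thesis .
  qed
  finally show ?thesis by simp
qed

definition outdeg1 :: "('a \<Rightarrow> 'a \<Rightarrow> bool) \<Rightarrow> bool" where
  "outdeg1 D \<longleftrightarrow> (\<forall>x y z. D x y \<and> D x z \<longrightarrow> y = z)"

lemma relpow_fun:
  assumes o1: "outdeg1 D"
  shows "(D^^k) x y \<Longrightarrow> y = ((\<lambda>x. SOME y. D x y)^^k) x \<and>
           (\<forall>i<k. D (((\<lambda>x. SOME y. D x y)^^i) x) (((\<lambda>x. SOME y. D x y)^^(Suc i)) x))"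
proof (induction k arbitrary: y)
  case 0
  then show ?case by simp
next
  case (Suc k)
  let ?s = "\<lambda>x. SOME y. D x y"
  from Suc.prems obtain w where w: "(D^^k) x w" "D w y" by auto
  from Suc.IH[OF w(1)] have IH: "w = (?s^^k) x" "\<forall>i<k. D ((?s^^i) x) ((?s^^(Suc i)) x)" by auto
  have sw: "?s w = y" using w(2) o1 unfolding outdeg1_def by (metis someI)
  show ?case
  proof
    show "y = (?s^^Suc k) x" using IH sw by simp
    show "\<forall>i<Suc k. D ((?s^^i) x) ((?s^^(Suc i)) x)"
      using IH w(2) sw by (auto simp: less_Suc_eq)
  qed
qed

lemma orbit_cycle:
  assumes or: "orientation V E D" and o1: "outdeg1 D" and irr: "\<forall>x. \<not> E x x"
    and zz: "D\<^sup>+\<^sup>+ z z"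
  shows "\<exists>c. is_cycle E c"
proof -
  let ?s = "\<lambda>x. SOME y. D x y"
  have DE: "\<And>x y. D x y \<Longrightarrow> E x y" using or unfolding orientation_def by auto
  obtain k0 where k0: "k0 > 0" "(D^^k0) z z" using zz by (metis tranclp_power)
  from relpow_fun[OF o1 k0(2)] have per: "(?s^^k0) z = z"
    and st0: "\<forall>i<k0. D ((?s^^i) z) ((?s^^(Suc i)) z)" by auto
  have modp: "(?s^^i) z = (?s^^(i mod k0)) z" for i
  proof -
    have "(?s^^(k0*j)) z = z" for j
      by (induction j) (auto simp: funpow_add per simp del: funpow.simps)
    have "(?s^^(i mod k0 + k0 * (i div k0))) z = (?s^^(i mod k0)) ((?s^^(k0 * (i div k0))) z)"
      by (simp only: funpow_add o_apply)
    also have "\<dots> = (?s^^(i mod k0)) z" using \<open>\<And>j. (?s^^(k0*j)) z = z\<close> by simp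
    finally show ?thesis by (metis mod_mult_div_eq)
  qed
  have st: "D ((?s^^i) z) ((?s^^(Suc i)) z)" for i
  proof -
    have "(?s^^(Suc i)) z = ?s ((?s^^i) z)" by simp
    also have "\<dots> = ?s ((?s^^(i mod k0)) z)" using modp by metis
    also have "\<dots> = (?s^^(Suc (i mod k0))) z" by simp
    finally have e: "(?s^^(Suc i)) z = (?s^^(Suc (i mod k0))) z" .
    have "D ((?s^^(i mod k0)) z) ((?s^^(Suc (i mod k0))) z)" using st0 k0(1) by auto
    then show ?thesis using e modp by metis
  qed
  define k where "k = (LEAST k. 0 < k \<and> (?s^^k) z = z)"
  have kP: "0 < k \<and> (?s^^k) z = z" unfolding k_def by (rule LeastI[of _ k0]) (use k0 per in auto)
  have kmin: "\<And>j. 0 < j \<Longrightarrow> j < k \<Longrightarrow> (?s^^j) z \<noteq> z"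
    unfolding k_def using not_less_Least by blast
  define c where "c = map (\<lambda>i. (?s^^i) z) [0..<k]"
  have lc: "length c = k" by (simp add: c_def)
  have ci: "\<And>i. i < k \<Longrightarrow> c ! i = (?s^^i) z" by (simp add: c_def)
  have k1: "k \<noteq> 1"
  proof
    assume "k = 1" then have "?s z = z" using kP by simp
    with st[of 0] have "D z z" by simp
    then show False using DE irr by blast
  qed
  have k2: "k \<noteq> 2"
  proof
    assume "k = 2" then have "?s (?s z) = z" using kP by (simp add: numeral_2_eq_2)
    with st[of 0] st[of 1] have "D z (?s z)" "D (?s z) z" by auto
    then show False using or unfolding orientation_def by blast
  qed
  have dist: "distinct c"
  proof (unfold distinct_conv_nth, intro allI impI)
    fix i j assume ij: "i < length c" "j < length c" "i \<noteq> j"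
    show "c ! i \<noteq> c ! j"
    proof
      assume eq: "c ! i = c ! j"
      have gen: "\<And>a b. a < b \<Longrightarrow> b < k \<Longrightarrow> (?s^^a) z = (?s^^b) z \<Longrightarrow> False"
      proof -
        fix a b assume ab: "a < b" "b < k" "(?s^^a) z = (?s^^b) z"
        have "(?s^^(k - b + a)) z = (?s^^(k-b)) ((?s^^a) z)" by (simp add: funpow_add)
        also have "\<dots> = (?s^^(k-b)) ((?s^^b) z)" using ab by simp
        also have "\<dots> = (?s^^(k-b+b)) z" by (simp only: funpow_add o_apply)
        also have "\<dots> = (?s^^k) z" using ab by simp
        also have "\<dots> = z" using kP by simp
        finally have X: "(?s^^(k - b + a)) z = z" .
        moreover have "0 < k-b+a" "k-b+a < k" using ab by auto
        ultimately show False using kmin[of "k-b+a"] by simp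
      qed
      show False
      proof (cases "i < j")
        case True
        have "(?s^^i) z = (?s^^j) z" using eq ci ij lc by simp
        then show ?thesis using gen[of i j] True ij lc by simp
      next
        case False then have "j < i" using ij by auto
        have "(?s^^j) z = (?s^^i) z" using eq ci ij lc by simp
        then show ?thesis using gen[of j i] \<open>j < i\<close> ij lc by simp
      qed
    qed
  qed
  have adj: "\<forall>i < length c. E (c ! i) (c ! ((i + 1) mod length c))"
  proof (intro allI impI)
    fix i assume i: "i < length c"
    show "E (c ! i) (c ! ((i + 1) mod length c))"
    proof (cases "i + 1 = k")
      case True
      then have "c ! ((i + 1) mod length c) = z" using lc kP ci by auto
      also have "z = (?s^^(Suc i)) z" using True kP by simp
      finally show ?thesis using st[of i] DE ci i lc by auto
    next
      case False
      then have "(i+1) mod length c = i + 1" using i lc by auto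
      then show ?thesis using st[of i] DE ci i lc False by auto
    qed
  qed
  have "length c \<ge> 3" using lc kP k1 k2 by auto
  then have "is_cycle E c" using dist adj unfolding is_cycle_def by auto
  then show ?thesis by blast
qed

lemma reach_linear:
  assumes o1: "outdeg1 D"
  shows "D\<^sup>*\<^sup>* u y \<Longrightarrow> D\<^sup>*\<^sup>* u z \<Longrightarrow> D\<^sup>*\<^sup>* y z \<or> D\<^sup>*\<^sup>* z y"
proof (induction arbitrary: z rule: rtranclp_induct)
  case base
  then show ?case by simp
next
  case (step y y')
  from step.IH[OF step.prems] show ?case
  proof
    assume "D\<^sup>*\<^sup>* y z"
    then show ?thesis
    proof (cases rule: converse_rtranclpE)
      case base then show ?thesis using step.hyps(2) by auto
    next
      case (step y1)
      then have "y1 = y'" using o1 \<open>D y y'\<close> unfolding outdeg1_def by blast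
      then show ?thesis using step by auto
    qed
  next
    assume "D\<^sup>*\<^sup>* z y" then show ?thesis using step.hyps(2) by (meson rtranclp.rtrancl_into_rtrancl)
  qed
qed

lemma reverse_reach:
  assumes or: "orientation V E D" and o1: "outdeg1 D" and acyc: "\<forall>x. \<not> D\<^sup>+\<^sup>+ x x"
    and sym: "\<forall>x y. E x y \<longrightarrow> E y x"
  shows "\<exists>D'. orientation V E D' \<and> outdeg1 D' \<and> (\<forall>y. \<not> D' u y)"
proof -
  define R where "R = {y. D\<^sup>*\<^sup>* u y}"
  define D' where "D' = (\<lambda>x y. if x \<in> R \<and> y \<in> R then D y x else D x y)"
  have DE: "\<And>x y. D x y \<Longrightarrow> E x y" using or unfolding orientation_def by auto
  have closed: "\<And>x y. x \<in> R \<Longrightarrow> D x y \<Longrightarrow> y \<in> R" unfolding R_def by auto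
  have pred: "\<And>x y z. x \<in> R \<Longrightarrow> y \<in> R \<Longrightarrow> z \<in> R \<Longrightarrow> D y x \<Longrightarrow> D z x \<Longrightarrow> y = z"
  proof -
    have one: "\<And>x y z. D\<^sup>*\<^sup>* y z \<Longrightarrow> D y x \<Longrightarrow> D z x \<Longrightarrow> y = z"
    proof -
      fix x y z assume yz: "D\<^sup>*\<^sup>* y z" and a: "D y x" "D z x"
      show "y = z"
      proof (rule ccontr)
        assume "y \<noteq> z"
        with yz obtain y1 where "D y y1" "D\<^sup>*\<^sup>* y1 z" by (metis converse_rtranclpE)
        then have "y1 = x" using a o1 unfolding outdeg1_def by blast
        with \<open>D\<^sup>*\<^sup>* y1 z\<close> a have "D\<^sup>+\<^sup>+ x x" by (metis rtranclp_into_tranclp1)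
        then show False using acyc by blast
      qed
    qed
    fix x y z assume "x \<in> R" "y \<in> R" "z \<in> R" "D y x" "D z x"
    then have "D\<^sup>*\<^sup>* y z \<or> D\<^sup>*\<^sup>* z y" using reach_linear[OF o1] unfolding R_def by blast
    then show "y = z" using one[of y z x] one[of z y x] \<open>D y x\<close> \<open>D z x\<close> by auto
  qed
  have "orientation V E D'"
    unfolding orientation_def
  proof (intro conjI allI impI)
    fix x y assume "D' x y" then show "E x y" unfolding D'_def using DE sym by (auto split: if_splits)
  next
    fix x y assume "E x y"
    then have "E y x" using sym by auto
    have o1': "D x y = (\<not> D y x)" using or \<open>E x y\<close> unfolding orientation_def by blast
    have o2': "D y x = (\<not> D x y)" using or \<open>E y x\<close> unfolding orientation_def by blast
    show "D' x y = (\<not> D' y x)" unfolding D'_def using o1' o2' by simp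
  qed
  moreover have "outdeg1 D'"
    unfolding outdeg1_def
  proof (intro allI impI)
    fix x y z assume a: "D' x y \<and> D' x z"
    show "y = z"
    proof (cases "x \<in> R")
      case True
      have "y \<in> R \<and> D y x" using a True closed unfolding D'_def by (auto split: if_splits)
      moreover have "z \<in> R \<and> D z x" using a True closed unfolding D'_def by (auto split: if_splits)
      ultimately show ?thesis using pred True by blast
    next
      case False
      then have "D x y" "D x z" using a unfolding D'_def by auto
      then show ?thesis using o1 unfolding outdeg1_def by blast
    qed
  qed
  moreover have "\<forall>y. \<not> D' u y"
  proof (intro allI notI)
    fix y assume a: "D' u y"
    have uR: "u \<in> R" unfolding R_def by simp
    show False
    proof (cases "y \<in> R")
      case True
      then have "D y u" "D\<^sup>*\<^sup>* u y" using a uR unfolding D'_def R_def by auto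
      then have "D\<^sup>+\<^sup>+ u u" by (metis rtranclp_into_tranclp1)
      then show False using acyc by blast
    next
      case False
      then have "D u y" using a unfolding D'_def by auto
      then show False using closed uR False by blast
    qed
  qed
  ultimately show ?thesis by blast
qed

lemma extend_edge:
  assumes uw: "u \<noteq> w"
    and or: "orientation V (\<lambda>x y. E x y \<and> {x,y} \<noteq> {u,w}) D" and o1: "outdeg1 D"
    and sink: "\<forall>y. \<not> D u y" and Euw: "E u w"
  shows "orientation V E (\<lambda>x y. D x y \<or> (x = u \<and> y = w)) \<and> outdeg1 (\<lambda>x y. D x y \<or> (x = u \<and> y = w))"
proof
  have DE: "\<And>x y. D x y \<Longrightarrow> E x y \<and> {x,y} \<noteq> {u,w}" using or unfolding orientation_def by blast
  show "orientation V E (\<lambda>x y. D x y \<or> (x = u \<and> y = w))"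
    unfolding orientation_def
  proof (intro conjI allI impI)
    fix x y assume "D x y \<or> (x = u \<and> y = w)" then show "E x y" using DE Euw by blast
  next
    fix x y assume Exy: "E x y"
    show "(D x y \<or> (x = u \<and> y = w)) = (\<not> (D y x \<or> (y = u \<and> x = w)))"
    proof (cases "{x,y} = {u,w}")
      case True
      have "{y,x} = {u,w}" using True by (simp add: insert_commute)
      then have "\<not> D x y" "\<not> D y x" using DE True by blast+
      moreover have "(x = u \<and> y = w) \<or> (x = w \<and> y = u)" using True by (simp add: doubleton_eq_iff)
      ultimately show ?thesis using uw by auto
    next
      case False
      have oE: "\<And>x y. E x y \<and> {x,y} \<noteq> {u,w} \<Longrightarrow> (D x y \<longleftrightarrow> \<not> D y x)"
        using or unfolding orientation_def by blast
      have "D x y = (\<not> D y x)" using oE[of x y] Exy False by blast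
      moreover have "\<not> (x = u \<and> y = w)" "\<not> (y = u \<and> x = w)" using False by (auto simp: doubleton_eq_iff)
      ultimately show ?thesis by auto
    qed
  qed
  show "outdeg1 (\<lambda>x y. D x y \<or> (x = u \<and> y = w))"
    using o1 sink unfolding outdeg1_def by metis
qed

lemma is_cycle_mono:
  assumes "\<forall>x y. E' x y \<longrightarrow> E x y" "is_cycle E' c"
  shows "is_cycle E c"
  using assms unfolding is_cycle_def by auto

lemma remove_edge_orient:
  assumes g: "graph V E" and Euw: "E u w"
    and acyc: "\<not> (\<exists>c. is_cycle (\<lambda>x y. E x y \<and> {x,y} \<noteq> {u,w}) c)"
    and IH: "\<exists>D. orientation V (\<lambda>x y. E x y \<and> {x,y} \<noteq> {u,w}) D \<and> outdeg1 D"
  shows "\<exists>D. orientation V E D \<and> outdeg1 D"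
proof -
  let ?E' = "\<lambda>x y. E x y \<and> {x,y} \<noteq> {u,w}"
  have sym: "\<forall>x y. E x y \<longrightarrow> E y x" and irr: "\<forall>x. \<not> E x x" using g unfolding graph_def by auto
  have sym': "\<forall>x y. ?E' x y \<longrightarrow> ?E' y x" using sym by (auto simp: insert_commute)
  have irr': "\<forall>x. \<not> ?E' x x" using irr by auto
  obtain D where D: "orientation V ?E' D" "outdeg1 D" using IH by blast
  have ac: "\<forall>x. \<not> D\<^sup>+\<^sup>+ x x" using orbit_cycle[OF D(1) D(2) irr'] acyc by blast
  obtain D' where D': "orientation V ?E' D'" "outdeg1 D'" "\<forall>y. \<not> D' u y"
    using reverse_reach[OF D(1) D(2) ac sym'] by blast
  have "u \<noteq> w" using Euw irr by auto
  from extend_edge[OF this D'(1) D'(2) D'(3) Euw] show ?thesis by blast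
qed

lemma forest_orient:
  assumes g: "graph V E" and acyc: "\<not> (\<exists>c. is_cycle E c)"
  shows "\<exists>D. orientation V E D \<and> outdeg1 D"
proof -
  have main: "\<And>E. n = card {(x,y). E x y} \<Longrightarrow> graph V E \<Longrightarrow> \<not> (\<exists>c. is_cycle E c) \<Longrightarrow>
           \<exists>D. orientation V E D \<and> outdeg1 D" for n
  proof (induction n rule: less_induct)
    case (less n E)
    show ?case
    proof (cases "\<exists>u w. E u w")
      case False
      then have "orientation V E (\<lambda>x y. False) \<and> outdeg1 (\<lambda>x y. False)"
        unfolding orientation_def outdeg1_def by auto
      then show ?thesis by blast
    next
      case True
      then obtain u w where Euw: "E u w" by blast
      let ?E' = "\<lambda>x y. E x y \<and> {x,y} \<noteq> {u,w}"
      have finA: "finite {(x,y). E x y}"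
        using less.prems(2) unfolding graph_def
        by (auto intro: finite_subset[of _ "V \<times> V"])
      have sub: "{(x,y). ?E' x y} \<subset> {(x,y). E x y}" using Euw by auto
      have lt: "card {(x,y). ?E' x y} < n" using psubset_card_mono[OF finA sub] less.prems(1) by simp
      have g': "graph V ?E'" using less.prems(2) unfolding graph_def by (auto simp: insert_commute)
      have ac': "\<not> (\<exists>c. is_cycle ?E' c)"
        using less.prems(3) is_cycle_mono[of ?E' E] by blast
      have "\<exists>D. orientation V ?E' D \<and> outdeg1 D" using less.IH[OF lt refl g' ac'] .
      from remove_edge_orient[OF less.prems(2) Euw ac' this] show ?thesis .
    qed
  qed
  show ?thesis by (rule main[OF refl g acyc])
qed

lemma cycle_edge_in: "is_cycle E c \<Longrightarrow> i < length c \<Longrightarrow> {c ! i, c ! ((i+1) mod length c)} \<in> cycle_edges c"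
  unfolding cycle_edges_def by (intro CollectI exI[of _ i]) simp

lemma pseudo_orient:
  assumes g: "graph V E" and p: "pseudotree V E"
  shows "\<exists>D. orientation V E D \<and> outdeg1 D"
proof (cases "\<exists>c. is_cycle E c")
  case False
  then show ?thesis using forest_orient[OF g] by blast
next
  case True
  then obtain c where c: "is_cycle E c" by blast
  define u where "u = c ! 0"
  define w where "w = c ! 1"
  have lc: "length c \<ge> 3" using c unfolding is_cycle_def by auto
  have m1: "(0+1) mod length c = 1" using lc by auto
  have "c \<noteq> []" using lc by auto
  have all: "\<forall>i<length c. E (c!i) (c!((i+1) mod length c))" using c unfolding is_cycle_def by blast
  have Euw: "E u w" using all[rule_format, of 0] lc \<open>c \<noteq> []\<close> unfolding u_def w_def by simp
  let ?E' = "\<lambda>x y. E x y \<and> {x,y} \<noteq> {u,w}"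
  have g': "graph V ?E'" using g unfolding graph_def by (auto simp: insert_commute)
  have ac': "\<not> (\<exists>c. is_cycle ?E' c)"
  proof
    assume "\<exists>c. is_cycle ?E' c"
    then obtain c' where c': "is_cycle ?E' c'" by blast
    then have "is_cycle E c'" using is_cycle_mono[of ?E' E] by blast
    then have eq: "cycle_edges c' = cycle_edges c" using p c unfolding pseudotree_def by blast
    have "0 < length c" using lc by auto
    from cycle_edge_in[OF c this] m1 have "{u,w} \<in> cycle_edges c" by (simp add: u_def w_def)
    then have "{u,w} \<in> cycle_edges c'" using eq by simp
    then obtain i where i: "i < length c'" "{u,w} = {c' ! i, c' ! ((i+1) mod length c')}"
      unfolding cycle_edges_def by blast
    have "?E' (c' ! i) (c' ! ((i+1) mod length c'))" using c' i(1) unfolding is_cycle_def by blast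
    then show False using i(2) by simp
  qed
  have ex: "\<exists>D. orientation V ?E' D \<and> outdeg1 D" by (rule forest_orient[OF g' ac'])
  show ?thesis by (rule remove_edge_orient[OF g Euw ac' ex])
qed

lemma graph_remove:
  assumes "graph V E" shows "graph V (\<lambda>x y. E x y \<and> {x,y} \<noteq> {u,w})"
  using assms unfolding graph_def by (auto simp: insert_commute)

lemma finite_arcs: "graph V E \<Longrightarrow> finite {(x,y). E x y}"
  unfolding graph_def by (auto intro: finite_subset[of _ "V \<times> V"])

lemma conn_arcs:
  assumes g: "graph V E" and c: "connected_graph V E" and ne: "V \<noteq> {}"
  shows "2 * (card V - 1) \<le> card {(x,y). E x y}"
proof -
  obtain r where r: "r \<in> V" using ne by blast
  have finV: "finite V" using g unfolding graph_def by auto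
  have sym: "\<And>x y. E x y \<Longrightarrow> E y x" and inV: "\<And>x y. E x y \<Longrightarrow> x \<in> V \<and> y \<in> V"
    using g unfolding graph_def by auto
  define dist where "dist v = (LEAST k. (E^^k) r v)" for v
  have reach: "\<And>v. v \<in> V \<Longrightarrow> \<exists>k. (E^^k) r v"
    using c r unfolding connected_graph_def by (metis rtranclp_power)
  have par: "\<exists>w. E w v \<and> dist w < dist v" if v: "v \<in> V" "v \<noteq> r" for v
  proof -
    have kd: "(E^^(dist v)) r v" unfolding dist_def using reach[OF v(1)] by (metis LeastI)
    have "dist v \<noteq> 0"
    proof
      assume "dist v = 0" then have "r = v" using kd by simp
      then show False using v by simp
    qed
    then obtain m where m: "dist v = Suc m" by (cases "dist v") auto
    then obtain w where w: "(E^^m) r w" "E w v" using kd by auto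
    have "dist w \<le> m" unfolding dist_def using w(1) by (rule Least_le)
    then show ?thesis using w m by auto
  qed
  define p where "p v = (SOME w. E w v \<and> dist w < dist v)" for v
  have pp: "\<And>v. v \<in> V - {r} \<Longrightarrow> E (p v) v \<and> dist (p v) < dist v"
    unfolding p_def using par by (metis (no_types, lifting) Diff_iff insertCI someI_ex)
  let ?S = "V - {r}"
  let ?F1 = "\<lambda>v. (v, p v)" and ?F2 = "\<lambda>v. (p v, v)"
  have i1: "inj_on ?F1 ?S" by (rule inj_onI) auto
  have i2: "inj_on ?F2 ?S" by (rule inj_onI) auto
  have disj: "?F1 ` ?S \<inter> ?F2 ` ?S = {}"
  proof (rule ccontr)
    assume "?F1 ` ?S \<inter> ?F2 ` ?S \<noteq> {}"
    then obtain v w where vw: "v \<in> ?S" "w \<in> ?S" "(v, p v) = (p w, w)" by blast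
    then have "v = p w" "p v = w" by auto
    then show False using pp[OF vw(1)] pp[OF vw(2)] by auto
  qed
  have fS: "finite ?S" using finV by auto
  have "2 * (card V - 1) = card ?S + card ?S" using r finV by simp
  also have "\<dots> = card (?F1 ` ?S) + card (?F2 ` ?S)" using i1 i2 by (simp add: card_image)
  also have "\<dots> = card (?F1 ` ?S \<union> ?F2 ` ?S)" using disj fS by (simp add: card_Un_disjoint)
  also have "\<dots> \<le> card {(x,y). E x y}"
    by (rule card_mono[OF finite_arcs[OF g]]) (use pp sym in auto)
  finally show ?thesis .
qed

lemma rtranclp_sym:
  assumes "\<And>x y. R x y \<Longrightarrow> R y x"
  shows "R\<^sup>*\<^sup>* x y \<Longrightarrow> R\<^sup>*\<^sup>* y x"
  by (induction rule: rtranclp_induct) (auto intro: converse_rtranclp_into_rtranclp assms)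

lemma cycle_nth_eq:
  assumes "is_cycle E c" "i < length c" "j < length c" "c ! i = c ! j"
  shows "i = j"
  using assms unfolding is_cycle_def by (simp add: nth_eq_iff_index_eq)

lemma cycle_remove_path:
  assumes cyc: "is_cycle E c" and i: "i < length c"
  defines "u \<equiv> c ! i" and "w \<equiv> c ! ((i+1) mod length c)"
  shows "(\<lambda>x y. E x y \<and> {x,y} \<noteq> {u,w})\<^sup>*\<^sup>* w u"
proof -
  let ?E' = "\<lambda>x y. E x y \<and> {x,y} \<noteq> {u,w}"
  let ?k = "length c"
  have k3: "?k \<ge> 3" using cyc unfolding is_cycle_def by auto
  have adj: "\<And>j. j < ?k \<Longrightarrow> E (c ! j) (c ! ((j+1) mod ?k))" using cyc unfolding is_cycle_def by auto
  have step: "?E' (c ! j) (c ! ((j+1) mod ?k))" if j: "j < ?k" "j \<noteq> i" for j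
  proof -
    have "{c ! j, c ! ((j+1) mod ?k)} \<noteq> {u,w}"
    proof
      assume eq: "{c ! j, c ! ((j+1) mod ?k)} = {u,w}"
      have k0: "0 < ?k" using k3 by auto
      have jm: "(j+1) mod ?k < ?k" "(i+1) mod ?k < ?k" using k0 by auto
      show False
      proof (cases "c ! j = u")
        case True then have "j = i" using cycle_nth_eq[OF cyc j(1) i] u_def by auto
        then show False using j by auto
      next
        case False
        then have "c ! j = w" "c ! ((j+1) mod ?k) = u" using eq by (auto simp: doubleton_eq_iff)
        then have "j = (i+1) mod ?k" "(j+1) mod ?k = i"
          using cycle_nth_eq[OF cyc j(1) jm(2)] cycle_nth_eq[OF cyc jm(1) i] u_def w_def by auto
        then have "(i+2) mod ?k = i" by (simp add: mod_Suc_eq)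
        moreover have "(i+2) mod ?k \<noteq> i"
        proof (cases "i + 2 < ?k")
          case True then show ?thesis by simp
        next
          case False
          then have "(i+2) mod ?k = i + 2 - ?k" using i k3 by (simp add: le_mod_geq)
          then show ?thesis using k3 False by auto
        qed
        ultimately show False by simp
      qed
    qed
    then show ?thesis using adj j by auto
  qed
  have "\<And>m. m < ?k \<Longrightarrow> ?E'\<^sup>*\<^sup>* w (c ! ((i+1+m) mod ?k))"
  proof -
    fix m show "m < ?k \<Longrightarrow> ?E'\<^sup>*\<^sup>* w (c ! ((i+1+m) mod ?k))"
    proof (induction m)
      case 0 then show ?case by (simp add: w_def)
    next
      case (Suc m)
      let ?j = "(i+1+m) mod ?k"
      have jk: "?j < ?k" using k3 by (intro mod_less_divisor) auto
      have "?j \<noteq> i"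
      proof
        assume "?j = i"
        moreover have "?j \<noteq> i"
        proof (cases "i+1+m < ?k")
          case True then show ?thesis by simp
        next
          case False
          then have "?j = i+1+m - ?k" using i Suc.prems by (simp add: le_mod_geq)
          then show ?thesis using Suc.prems i False by auto
        qed
        ultimately have False by simp
        then show False .
      qed
      then have "?E' (c ! ?j) (c ! ((?j+1) mod ?k))" using step jk by blast
      moreover have "(?j+1) mod ?k = (i+1+Suc m) mod ?k" by (simp add: mod_Suc_eq)
      moreover have "?E'\<^sup>*\<^sup>* w (c ! ?j)" using Suc.IH Suc.prems by simp
      ultimately show ?case using rtranclp.rtrancl_into_rtrancl[of ?E' w "c ! ?j"] by simp
    qed
  qed
  from this[of "?k - 1"] k3 have "?E'\<^sup>*\<^sup>* w (c ! ((i+1+(?k-1)) mod ?k))" by simp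
  moreover have "i+1+(?k-1) = i + ?k" using k3 by simp
  then have "(i+1+(?k-1)) mod ?k = i" using i by simp
  ultimately show ?thesis by (simp add: u_def)
qed

lemma rtranclp_lift:
  assumes "\<And>x y. R x y \<Longrightarrow> S\<^sup>*\<^sup>* x y"
  shows "R\<^sup>*\<^sup>* x y \<Longrightarrow> S\<^sup>*\<^sup>* x y"
  by (induction rule: rtranclp_induct) (auto intro: rtranclp_trans assms)

lemma cycle_remove_conn:
  assumes g: "graph V E" and con: "connected_graph V E" and cyc: "is_cycle E c" and i: "i < length c"
  shows "connected_graph V (\<lambda>x y. E x y \<and> {x,y} \<noteq> {c ! i, c ! ((i+1) mod length c)})"
proof -
  define u where "u = c ! i"
  define w where "w = c ! ((i+1) mod length c)"
  let ?E' = "\<lambda>x y. E x y \<and> {x,y} \<noteq> {u,w}"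
  have p1: "?E'\<^sup>*\<^sup>* w u" using cycle_remove_path[OF cyc i] unfolding u_def w_def by simp
  have sym': "\<And>x y. ?E' x y \<Longrightarrow> ?E' y x" using g unfolding graph_def by (auto simp: insert_commute)
  have p2: "?E'\<^sup>*\<^sup>* u w" using rtranclp_sym[OF sym' p1] .
  have one: "?E'\<^sup>*\<^sup>* x y" if "E x y" for x y
  proof (cases "{x,y} = {u,w}")
    case True
    then have "(x = u \<and> y = w) \<or> (x = w \<and> y = u)" by (simp add: doubleton_eq_iff)
    then show ?thesis using p1 p2 by auto
  next
    case False then show ?thesis using that by auto
  qed
  have "connected_graph V ?E'"
    unfolding connected_graph_def
  proof (intro ballI)
    fix x y assume "x \<in> V" "y \<in> V"
    then have "E\<^sup>*\<^sup>* x y" using con unfolding connected_graph_def by blast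
    then show "?E'\<^sup>*\<^sup>* x y" using rtranclp_lift[of E ?E' x y] one by blast
  qed
  then show ?thesis unfolding u_def w_def .
qed

lemma arcs_remove:
  assumes g: "graph V E" and Euw: "E u w"
  shows "card {(x,y). E x y \<and> {x,y} \<noteq> {u,w}} = card {(x,y). E x y} - 2"
proof -
  have uw: "u \<noteq> w" using g Euw unfolding graph_def by auto
  have Ewu: "E w u" using g Euw unfolding graph_def by auto
  have eq: "{(x,y). E x y \<and> {x,y} \<noteq> {u,w}} = {(x,y). E x y} - {(u,w),(w,u)}"
    by (auto simp: doubleton_eq_iff)
  have "card ({(x,y). E x y} - {(u,w),(w,u)}) = card {(x,y). E x y} - card {(u,w),(w,u)}"
    by (rule card_Diff_subset) (use Euw Ewu in auto)
  then show ?thesis using eq uw by simp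
qed

lemma two_cycles_arcs:
  assumes g: "graph V E" and con: "connected_graph V E"
    and c1: "is_cycle E c1" and c2: "is_cycle E c2"
    and e: "e \<in> cycle_edges c1" "e \<notin> cycle_edges c2"
  shows "2 * card V + 2 \<le> card {(x,y). E x y}"
proof -
  obtain i where i: "i < length c1" "e = {c1 ! i, c1 ! ((i+1) mod length c1)}"
    using e(1) unfolding cycle_edges_def by blast
  define u where "u = c1 ! i"
  define w where "w = c1 ! ((i+1) mod length c1)"
  let ?E' = "\<lambda>x y. E x y \<and> {x,y} \<noteq> {u,w}"
  have con': "connected_graph V ?E'" using cycle_remove_conn[OF g con c1 i(1)] unfolding u_def w_def .
  have g': "graph V ?E'" by (rule graph_remove[OF g])
  have Euw: "E u w" using c1 i(1) unfolding is_cycle_def u_def w_def by blast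
  have all: "\<forall>j<length c2. ?E' (c2 ! j) (c2 ! ((j + 1) mod length c2))"
  proof (intro allI impI)
    fix j assume j: "j < length c2"
    have "E (c2 ! j) (c2 ! ((j + 1) mod length c2))" using c2 j unfolding is_cycle_def by blast
    moreover have "{c2 ! j, c2 ! ((j + 1) mod length c2)} \<in> cycle_edges c2"
      by (rule cycle_edge_in[OF c2 j])
    then have "{c2 ! j, c2 ! ((j + 1) mod length c2)} \<noteq> {u,w}" using e(2) i(2) u_def w_def by auto
    ultimately show "?E' (c2 ! j) (c2 ! ((j + 1) mod length c2))" by simp
  qed
  have c2': "is_cycle ?E' c2" using c2 all unfolding is_cycle_def by blast
  have l2: "0 < length c2" using c2 unfolding is_cycle_def by auto
  define u' where "u' = c2 ! 0"
  define w' where "w' = c2 ! ((0+1) mod length c2)"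
  let ?E'' = "\<lambda>x y. ?E' x y \<and> {x,y} \<noteq> {u',w'}"
  have con'': "connected_graph V ?E''" using cycle_remove_conn[OF g' con' c2' l2] unfolding u'_def w'_def .
  have g'': "graph V ?E''" by (rule graph_remove[OF g'])
  have Eu'w': "?E' u' w'" using c2' l2 unfolding is_cycle_def u'_def w'_def by blast
  have ne: "V \<noteq> {}" using Euw g unfolding graph_def by auto
  have "2 * (card V - 1) \<le> card {(x,y). ?E'' x y}" by (rule conn_arcs[OF g'' con'' ne])
  also have "card {(x,y). ?E'' x y} = card {(x,y). ?E' x y} - 2" by (rule arcs_remove[OF g' Eu'w'])
  also have "card {(x,y). ?E' x y} = card {(x,y). E x y} - 2" by (rule arcs_remove[OF g Euw])
  finally have "2 * (card V - 1) \<le> card {(x,y). E x y} - 2 - 2" .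
  moreover have "card V \<ge> 3"
  proof -
    have "set c1 \<subseteq> V"
    proof
      fix x assume "x \<in> set c1"
      then obtain j where j: "j < length c1" "x = c1 ! j" by (auto simp: in_set_conv_nth)
      then show "x \<in> V" using c1 g unfolding is_cycle_def graph_def by blast
    qed
    moreover have "card (set c1) \<ge> 3" using c1 unfolding is_cycle_def by (simp add: distinct_card)
    moreover have "finite V" using g unfolding graph_def by auto
    ultimately show ?thesis by (meson card_mono le_trans)
  qed
  ultimately show ?thesis by linarith
qed

lemma arcs_le_pseudo:
  assumes g: "graph V E" and con: "connected_graph V E"
    and le: "card {(x,y). E x y} \<le> 2 * card V"
  shows "pseudotree V E"
  unfolding pseudotree_def
proof (intro conjI allI impI)
  show "connected_graph V E" by (rule con)
next
  fix c1 c2 assume cc: "is_cycle E c1 \<and> is_cycle E c2"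
  show "cycle_edges c1 = cycle_edges c2"
  proof (rule ccontr)
    assume ne: "cycle_edges c1 \<noteq> cycle_edges c2"
    then have "(\<exists>e. e \<in> cycle_edges c1 \<and> e \<notin> cycle_edges c2) \<or> (\<exists>e. e \<in> cycle_edges c2 \<and> e \<notin> cycle_edges c1)"
      by blast
    then have "2 * card V + 2 \<le> card {(x,y). E x y}"
      using two_cycles_arcs[OF g con] cc by blast
    then show False using le by simp
  qed
qed

lemma prod_arcs:
  "card {(x,y). dprod_E E1 E2 x y} = card {(a,b). E1 a b} * card {(a,b). E2 a b}"
proof -
  let ?h = "\<lambda>((a,b),(c,d)). ((a,c),(b,d))"
  have inj: "inj_on ?h ({(a,b). E1 a b} \<times> {(a,b). E2 a b})" by (rule inj_onI) auto
  have eq: "{(x,y). dprod_E E1 E2 x y} = ?h ` ({(a,b). E1 a b} \<times> {(a,b). E2 a b})"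
  proof (rule set_eqI)
    fix z :: "('a \<times> 'b) \<times> ('a \<times> 'b)"
    obtain a c b d where z: "z = ((a,c),(b,d))" by (metis prod.exhaust)
    show "z \<in> {(x,y). dprod_E E1 E2 x y} \<longleftrightarrow> z \<in> ?h ` ({(a,b). E1 a b} \<times> {(a,b). E2 a b})"
    proof
      assume "z \<in> {(x,y). dprod_E E1 E2 x y}"
      then have "E1 a b" "E2 c d" using z by (auto simp: dprod_E_def)
      then show "z \<in> ?h ` ({(a,b). E1 a b} \<times> {(a,b). E2 a b})" unfolding z
        by (intro image_eqI[of _ _ "((a,b),(c,d))"]) auto
    next
      assume "z \<in> ?h ` ({(a,b). E1 a b} \<times> {(a,b). E2 a b})"
      then show "z \<in> {(x,y). dprod_E E1 E2 x y}" by (auto simp: dprod_E_def)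
    qed
  qed
  show ?thesis unfolding eq by (simp add: card_image[OF inj] card_cartesian_product)
qed

lemma arcs_in: "graph V E \<Longrightarrow> {(x,y). x \<in> V \<and> y \<in> V \<and> E x y} = {(x,y). E x y}"
  unfolding graph_def by auto

lemma K2_only_if:
  assumes g1: "graph V1 E1" and V1: "V1 = {p,q}" "p \<noteq> q" and Epq: "E1 p q"
    and g2: "graph V2 E2" and con2: "connected_graph V2 E2"
    and opo: "one_perfectly_orientable (dprod_V V1 V2) (dprod_E E1 E2)"
  shows "pseudotree V2 E2"
proof -
  obtain D where D: "one_perfect (dprod_V V1 V2) (dprod_E E1 E2) D"
    using opo unfolding one_perfectly_orientable_def by blast
  have g: "graph (dprod_V V1 V2) (dprod_E E1 E2)" by (rule graph_dprod[OF g1 g2])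
  have irr1: "\<And>x. \<not> E1 x x" and in1: "\<And>x y. E1 x y \<Longrightarrow> x \<in> V1 \<and> y \<in> V1"
    and sym1: "\<And>x y. E1 x y \<Longrightarrow> E1 y x" using g1 unfolding graph_def by auto
  have tf: "\<forall>x\<in>dprod_V V1 V2. \<forall>y\<in>dprod_V V1 V2. \<forall>z\<in>dprod_V V1 V2.
      \<not>(dprod_E E1 E2 x y \<and> dprod_E E1 E2 y z \<and> dprod_E E1 E2 x z)"
  proof (intro ballI notI)
    fix x y z assume "x \<in> dprod_V V1 V2" "y \<in> dprod_V V1 V2" "z \<in> dprod_V V1 V2"
      and e: "dprod_E E1 E2 x y \<and> dprod_E E1 E2 y z \<and> dprod_E E1 E2 x z"
    then have "E1 (fst x) (fst y)" "E1 (fst y) (fst z)" "E1 (fst x) (fst z)" unfolding dprod_E_def by auto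
    then have "fst x \<noteq> fst y" "fst y \<noteq> fst z" "fst x \<noteq> fst z" "fst x \<in> V1" "fst y \<in> V1" "fst z \<in> V1"
      using irr1 in1 by metis+
    then show False using V1 by auto
  qed
  have "card {(x,y). x \<in> dprod_V V1 V2 \<and> y \<in> dprod_V V1 V2 \<and> dprod_E E1 E2 x y} \<le> 2 * card (dprod_V V1 V2)"
    by (rule count_tf[OF g D subset_refl tf])
  then have le: "card {(x,y). dprod_E E1 E2 x y} \<le> 2 * card (dprod_V V1 V2)" using arcs_in[OF g] by simp
  have A1: "{(a,b). E1 a b} = {(p,q),(q,p)}"
  proof (rule set_eqI)
    fix z :: "'a \<times> 'a" obtain a b where z: "z = (a,b)" by (cases z)
    show "z \<in> {(a,b). E1 a b} \<longleftrightarrow> z \<in> {(p,q),(q,p)}"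
      unfolding z using in1[of a b] irr1 V1 Epq sym1 by auto
  qed
  have cA1: "card {(a,b). E1 a b} = 2" unfolding A1 using V1(2) by simp
  have finV2: "finite V2" using g2 unfolding graph_def by auto
  have "card (dprod_V V1 V2) = 2 * card V2" unfolding dprod_V_def using V1 finV2
    by (simp add: card_cartesian_product)
  then have "2 * card {(a,b). E2 a b} \<le> 2 * (2 * card V2)" using le prod_arcs[of E1 E2] cA1 by simp
  then have "card {(a,b). E2 a b} \<le> 2 * card V2" by simp
  then show ?thesis by (rule arcs_le_pseudo[OF g2 con2])
qed

lemma K2_if:
  assumes V1: "V1 = {p,q}" and g1: "graph V1 E1" and g2: "graph V2 E2"
    and or: "orientation V2 E2 D" and o1: "outdeg1 D"
  shows "one_perfectly_orientable (dprod_V V1 V2) (dprod_E E1 E2)"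
proof -
  define DD where "DD x y = (dprod_E E1 E2 x y \<and> D (snd x) (snd y))" for x y
  have irr1: "\<And>x. \<not> E1 x x" and in1: "\<And>x y. E1 x y \<Longrightarrow> x \<in> V1 \<and> y \<in> V1"
    using g1 unfolding graph_def by auto
  have sym2: "\<And>x y. E2 x y \<Longrightarrow> E2 y x" using g2 unfolding graph_def by auto
  have oE: "\<And>x y. E2 x y \<Longrightarrow> (D x y \<longleftrightarrow> \<not> D y x)" using or unfolding orientation_def by blast
  have "orientation (dprod_V V1 V2) (dprod_E E1 E2) DD"
    unfolding orientation_def
  proof (intro conjI allI impI)
    fix x y assume "DD x y" then show "dprod_E E1 E2 x y" unfolding DD_def by simp
  next
    fix x y assume e: "dprod_E E1 E2 x y"
    then have "E1 (fst y) (fst x) \<and> E2 (snd y) (snd x)" using g1 g2 unfolding dprod_E_def graph_def by auto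
    then have "dprod_E E1 E2 y x" unfolding dprod_E_def by simp
    moreover have "D (snd x) (snd y) \<longleftrightarrow> \<not> D (snd y) (snd x)" using e oE unfolding dprod_E_def by blast
    ultimately show "DD x y = (\<not> DD y x)" unfolding DD_def using e by simp
  qed
  moreover have "\<forall>v\<in>dprod_V V1 V2. \<forall>x y. DD v x \<and> DD v y \<and> x \<noteq> y \<longrightarrow> dprod_E E1 E2 x y"
  proof (intro ballI allI impI)
    fix v x y assume a: "DD v x \<and> DD v y \<and> x \<noteq> y"
    then have "snd x = snd y" using o1 unfolding DD_def outdeg1_def by blast
    moreover have "fst x = fst y"
    proof -
      have ex: "E1 (fst v) (fst x)" and ey: "E1 (fst v) (fst y)" using a unfolding DD_def dprod_E_def by auto
      have "fst v \<noteq> fst x" using ex irr1 by force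
      moreover have "fst v \<noteq> fst y" using ey irr1 by force
      moreover have "fst x \<in> V1" "fst v \<in> V1" using in1[OF ex] by simp_all
      moreover have "fst y \<in> V1" using in1[OF ey] by simp
      ultimately show ?thesis using V1 by auto
    qed
    ultimately have "x = y" by (simp add: prod_eq_iff)
    then show "dprod_E E1 E2 x y" using a by simp
  qed
  ultimately show ?thesis unfolding one_perfectly_orientable_def one_perfect_def by blast
qed

lemma K2_from_iso:
  assumes "graph_iso V E K2_V K2_E"
  shows "\<exists>p q. V = {p,q} \<and> p \<noteq> q \<and> E p q"
proof -
  obtain f where f: "bij_betw f V K2_V" "\<forall>x\<in>V. \<forall>y\<in>V. E x y \<longleftrightarrow> K2_E (f x) (f y)"
    using assms unfolding graph_iso_def by blast
  have inj: "inj_on f V" and img: "f ` V = {0,1}" using f(1) unfolding bij_betw_def K2_V_def by auto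
  obtain p where pV: "p \<in> V" "f p = 0" using img by (metis imageE insertI1)
  obtain q where qV: "q \<in> V" "f q = 1" using img by (metis imageE insertI1 insert_commute)
  have "V \<subseteq> {p,q}"
  proof
    fix x assume x: "x \<in> V"
    then have "f x \<in> {0,1}" using img by blast
    then have "f x = f p \<or> f x = f q" using pV qV by simp
    then show "x \<in> {p,q}" using inj x pV(1) qV(1) unfolding inj_on_def by blast
  qed
  then have "V = {p,q}" using pV qV by blast
  moreover have "p \<noteq> q" using pV qV by auto
  moreover have "E p q" using f(2) pV qV by (simp add: K2_E_def K2_V_def)
  ultimately show ?thesis by blast
qed

lemma K2_to_iso:
  assumes g: "graph V E" and V: "V = {p,q}" "p \<noteq> q" and Epq: "E p q"
  shows "graph_iso V E K2_V K2_E"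
proof -
  define f where "f x = (if x = p then 0 else (1::nat))" for x
  have "bij_betw f V K2_V" unfolding bij_betw_def inj_on_def f_def V K2_V_def using V(2) by auto
  moreover have "\<forall>x\<in>V. \<forall>y\<in>V. E x y \<longleftrightarrow> K2_E (f x) (f y)"
  proof -
    have "E q p" "\<not> E p p" "\<not> E q q" using g Epq unfolding graph_def by blast+
    then show ?thesis using Epq V unfolding K2_E_def K2_V_def f_def by auto
  qed
  ultimately show ?thesis unfolding graph_iso_def by blast
qed

lemma card2_K2:
  assumes g: "graph V E" and con: "connected_graph V E" and c: "card V = 2"
  shows "\<exists>p q. V = {p,q} \<and> p \<noteq> q \<and> E p q"
proof -
  obtain p q where pq: "V = {p,q}" "p \<noteq> q" using c by (meson card_2_iff)
  have "E\<^sup>*\<^sup>* p q" using con pq unfolding connected_graph_def by auto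
  then have "E p q"
  proof (cases rule: converse_rtranclpE)
    case base then show ?thesis using pq by simp
  next
    case (step y)
    then have "y \<in> V" "y \<noteq> p" using g unfolding graph_def by auto
    then have "y = q" using pq by auto
    then show ?thesis using step by simp
  qed
  then show ?thesis using pq by blast
qed

lemma opo_swap:
  assumes "one_perfectly_orientable (dprod_V V1 V2) (dprod_E E1 E2)"
  shows "one_perfectly_orientable (dprod_V V2 V1) (dprod_E E2 E1)"
proof -
  obtain D where D: "one_perfect (dprod_V V1 V2) (dprod_E E1 E2) D"
    using assms unfolding one_perfectly_orientable_def by blast
  define DD where "DD x y = D (prod.swap x) (prod.swap y)" for x y
  have eE: "\<And>x y. dprod_E E2 E1 x y = dprod_E E1 E2 (prod.swap x) (prod.swap y)"
    unfolding dprod_E_def by auto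
  have eV: "\<And>x. x \<in> dprod_V V2 V1 \<longleftrightarrow> prod.swap x \<in> dprod_V V1 V2"
    unfolding dprod_V_def by auto
  have DE: "\<And>x y. D x y \<Longrightarrow> dprod_E E1 E2 x y" and
    oD: "\<And>x y. dprod_E E1 E2 x y \<Longrightarrow> (D x y \<longleftrightarrow> \<not> D y x)" and
    pD: "\<And>v x y. v \<in> dprod_V V1 V2 \<Longrightarrow> D v x \<Longrightarrow> D v y \<Longrightarrow> x \<noteq> y \<Longrightarrow> dprod_E E1 E2 x y"
    using D unfolding one_perfect_def orientation_def by blast+
  have "orientation (dprod_V V2 V1) (dprod_E E2 E1) DD"
    unfolding orientation_def
  proof (intro conjI allI impI)
    fix x y assume "DD x y" then show "dprod_E E2 E1 x y" unfolding DD_def eE by (rule DE)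
  next
    fix x y assume "dprod_E E2 E1 x y" then show "DD x y = (\<not> DD y x)" unfolding DD_def eE by (rule oD)
  qed
  moreover have "\<forall>v\<in>dprod_V V2 V1. \<forall>x y. DD v x \<and> DD v y \<and> x \<noteq> y \<longrightarrow> dprod_E E2 E1 x y"
  proof (intro ballI allI impI)
    fix v x y assume v: "v \<in> dprod_V V2 V1" and a: "DD v x \<and> DD v y \<and> x \<noteq> y"
    have "prod.swap v \<in> dprod_V V1 V2" using v eV by simp
    moreover have "prod.swap x \<noteq> prod.swap y" using a by (metis swap_swap)
    ultimately show "dprod_E E2 E1 x y" unfolding eE using pD a unfolding DD_def by blast
  qed
  ultimately have "one_perfect (dprod_V V2 V1) (dprod_E E2 E1) DD" unfolding one_perfect_def by blast
  then show ?thesis unfolding one_perfectly_orientable_def by blast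
qed

lemma opo_iso:
  assumes i1: "graph_iso V1 E1 W1 F1" and i2: "graph_iso V2 E2 W2 F2"
    and g1: "graph V1 E1" and g2: "graph V2 E2"
    and opo: "one_perfectly_orientable (dprod_V W1 W2) (dprod_E F1 F2)"
  shows "one_perfectly_orientable (dprod_V V1 V2) (dprod_E E1 E2)"
proof -
  obtain f where f: "bij_betw f V1 W1" "\<forall>x\<in>V1. \<forall>y\<in>V1. E1 x y \<longleftrightarrow> F1 (f x) (f y)"
    using i1 unfolding graph_iso_def by blast
  obtain g where g: "bij_betw g V2 W2" "\<forall>x\<in>V2. \<forall>y\<in>V2. E2 x y \<longleftrightarrow> F2 (g x) (g y)"
    using i2 unfolding graph_iso_def by blast
  obtain D where D: "one_perfect (dprod_V W1 W2) (dprod_E F1 F2) D"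
    using opo unfolding one_perfectly_orientable_def by blast
  define h where "h x = (f (fst x), g (snd x))" for x
  define DD where "DD x y = (dprod_E E1 E2 x y \<and> D (h x) (h y))" for x y
  have in1: "\<And>x y. E1 x y \<Longrightarrow> x \<in> V1 \<and> y \<in> V1" and sym1: "\<And>x y. E1 x y \<Longrightarrow> E1 y x"
    using g1 unfolding graph_def by auto
  have in2: "\<And>x y. E2 x y \<Longrightarrow> x \<in> V2 \<and> y \<in> V2" and sym2: "\<And>x y. E2 x y \<Longrightarrow> E2 y x"
    using g2 unfolding graph_def by auto
  have f2: "\<And>a b. a \<in> V1 \<Longrightarrow> b \<in> V1 \<Longrightarrow> E1 a b \<longleftrightarrow> F1 (f a) (f b)" using f(2) by blast
  have g2': "\<And>a b. a \<in> V2 \<Longrightarrow> b \<in> V2 \<Longrightarrow> E2 a b \<longleftrightarrow> F2 (g a) (g b)" using g(2) by blast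
  have fi: "inj_on f V1" and gi: "inj_on g V2" using f(1) g(1) unfolding bij_betw_def by blast+
  have fV: "f ` V1 = W1" and gV: "g ` V2 = W2" using f(1) g(1) unfolding bij_betw_def by blast+
  have hE: "dprod_E E1 E2 x y \<longleftrightarrow> dprod_E F1 F2 (h x) (h y)" if "x \<in> V1 \<times> V2" "y \<in> V1 \<times> V2" for x y
  proof -
    have "fst x \<in> V1" "snd x \<in> V2" "fst y \<in> V1" "snd y \<in> V2" using that by (auto simp: mem_Times_iff)
    then show ?thesis unfolding dprod_E_def h_def using f2 g2' by simp
  qed
  have hinj: "x = y" if "x \<in> V1 \<times> V2" "y \<in> V1 \<times> V2" "h x = h y" for x y
  proof -
    have "fst x \<in> V1" "snd x \<in> V2" "fst y \<in> V1" "snd y \<in> V2" using that by (auto simp: mem_Times_iff)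
    moreover have "f (fst x) = f (fst y)" "g (snd x) = g (snd y)" using that(3) unfolding h_def by simp_all
    ultimately have "fst x = fst y" "snd x = snd y" using fi gi unfolding inj_on_def by blast+
    then show ?thesis by (simp add: prod_eq_iff)
  qed
  have hV: "h x \<in> dprod_V W1 W2" if "x \<in> V1 \<times> V2" for x
  proof -
    have "fst x \<in> V1" "snd x \<in> V2" using that by (auto simp: mem_Times_iff)
    then show ?thesis unfolding h_def dprod_V_def using fV gV by blast
  qed
  have EV: "x \<in> V1 \<times> V2 \<and> y \<in> V1 \<times> V2" if "dprod_E E1 E2 x y" for x y
  proof -
    have "E1 (fst x) (fst y)" "E2 (snd x) (snd y)" using that unfolding dprod_E_def by simp_all
    then have "fst x \<in> V1" "snd x \<in> V2" "fst y \<in> V1" "snd y \<in> V2" using in1 in2 by blast+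
    then show ?thesis by (simp add: mem_Times_iff)
  qed
  have oD: "\<And>x y. dprod_E F1 F2 x y \<Longrightarrow> (D x y \<longleftrightarrow> \<not> D y x)"
    using D unfolding one_perfect_def orientation_def by blast
  have pD: "\<And>v x y. v \<in> dprod_V W1 W2 \<Longrightarrow> D v x \<Longrightarrow> D v y \<Longrightarrow> x \<noteq> y \<Longrightarrow> dprod_E F1 F2 x y"
    using D unfolding one_perfect_def by blast
  have DF: "\<And>x y. D x y \<Longrightarrow> dprod_E F1 F2 x y"
    using D unfolding one_perfect_def orientation_def by blast
  have "orientation (dprod_V V1 V2) (dprod_E E1 E2) DD"
    unfolding orientation_def
  proof (intro conjI allI impI)
    fix x y assume "DD x y" then show "dprod_E E1 E2 x y" unfolding DD_def by simp
  next
    fix x y assume e: "dprod_E E1 E2 x y"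
    have e': "dprod_E E1 E2 y x" using e sym1 sym2 unfolding dprod_E_def by auto
    have "dprod_E F1 F2 (h x) (h y)" using hE EV e by blast
    then show "DD x y = (\<not> DD y x)" unfolding DD_def using e e' oD by blast
  qed
  moreover have "\<forall>v\<in>dprod_V V1 V2. \<forall>x y. DD v x \<and> DD v y \<and> x \<noteq> y \<longrightarrow> dprod_E E1 E2 x y"
  proof (intro ballI allI impI)
    fix v x y assume v: "v \<in> dprod_V V1 V2" and a: "DD v x \<and> DD v y \<and> x \<noteq> y"
    have xy: "x \<in> V1 \<times> V2" "y \<in> V1 \<times> V2" using a EV unfolding DD_def by blast+
    have "h x \<noteq> h y" using hinj xy a by blast
    moreover have "h v \<in> dprod_V W1 W2" using hV v unfolding dprod_V_def by blast
    ultimately have "dprod_E F1 F2 (h x) (h y)" using pD a unfolding DD_def by blast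
    then show "dprod_E E1 E2 x y" using hE xy by blast
  qed
  ultimately show ?thesis unfolding one_perfectly_orientable_def one_perfect_def by blast
qed

lemma K33_sat:
  assumes "D v00 v12 = (\<not> D v12 v00)"
    and "D v00 v21 = (\<not> D v21 v00)"
    and "D v00 v22 = (\<not> D v22 v00)"
    and "D v01 v10 = (\<not> D v10 v01)"
    and "D v01 v12 = (\<not> D v12 v01)"
    and "D v01 v22 = (\<not> D v22 v01)"
    and "D v10 v21 = (\<not> D v21 v10)"
    and "D v10 v22 = (\<not> D v22 v10)"
    and "D v12 v21 = (\<not> D v21 v12)"
    and "\<not> (D v00 v12 \<and> D v00 v22)"
    and "\<not> (D v00 v21 \<and> D v00 v22)"
    and "\<not> (D v01 v10 \<and> D v01 v12)"
    and "\<not> (D v01 v12 \<and> D v01 v22)"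
    and "\<not> (D v10 v01 \<and> D v10 v21)"
    and "\<not> (D v10 v21 \<and> D v10 v22)"
    and "\<not> (D v12 v00 \<and> D v12 v01)"
    and "\<not> (D v12 v01 \<and> D v12 v21)"
    and "\<not> (D v21 v00 \<and> D v21 v10)"
    and "\<not> (D v21 v10 \<and> D v21 v12)"
    and "\<not> (D v22 v00 \<and> D v22 v01)"
    and "\<not> (D v22 v00 \<and> D v22 v10)"
  shows False
  using assms by sat

lemma K33_obstr:
  assumes g1: "graph V1 E1" and g2: "graph V2 E2"
    and D: "one_perfect (dprod_V V1 V2) (dprod_E E1 E2) D"
    and t1: "E1 g0 g1" "E1 g0 g2" "E1 g1 g2" and t2: "E2 h0 h1" "E2 h0 h2" "E2 h1 h2"
  shows False
proof -
  have sym1: "\<And>x y. E1 x y \<Longrightarrow> E1 y x" and irr1: "\<And>x. \<not> E1 x x"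
    and in1: "\<And>x y. E1 x y \<Longrightarrow> x \<in> V1 \<and> y \<in> V1" using g1 unfolding graph_def by auto
  have sym2: "\<And>x y. E2 x y \<Longrightarrow> E2 y x" and irr2: "\<And>x. \<not> E2 x x"
    and in2: "\<And>x y. E2 x y \<Longrightarrow> x \<in> V2 \<and> y \<in> V2" using g2 unfolding graph_def by auto
  have e1: "E1 g1 g0" "E1 g2 g0" "E1 g2 g1" using t1 sym1 by blast+
  have e2: "E2 h1 h0" "E2 h2 h0" "E2 h2 h1" using t2 sym2 by blast+
  have n1: "\<not> E1 g0 g0" "\<not> E1 g1 g1" "\<not> E1 g2 g2" using irr1 by blast+
  have n2: "\<not> E2 h0 h0" "\<not> E2 h1 h1" "\<not> E2 h2 h2" using irr2 by blast+
  have d1: "g0 \<noteq> g1" "g0 \<noteq> g2" "g1 \<noteq> g2" using t1 irr1 by auto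
  have d2: "h0 \<noteq> h1" "h0 \<noteq> h2" "h1 \<noteq> h2" using t2 irr2 by auto
  have m1: "g0 \<in> V1" "g1 \<in> V1" "g2 \<in> V1" using in1 t1 by blast+
  have m2: "h0 \<in> V2" "h1 \<in> V2" "h2 \<in> V2" using in2 t2 by blast+
  have oE: "\<And>x y. dprod_E E1 E2 x y \<Longrightarrow> D x y = (\<not> D y x)"
    using D unfolding one_perfect_def orientation_def by blast
  have pf: "\<And>v x y. v \<in> dprod_V V1 V2 \<Longrightarrow> D v x \<Longrightarrow> D v y \<Longrightarrow> x \<noteq> y \<Longrightarrow> dprod_E E1 E2 x y"
    using D unfolding one_perfect_def by blast
  have cl: "\<And>v x y. v \<in> dprod_V V1 V2 \<Longrightarrow> x \<noteq> y \<Longrightarrow> \<not> dprod_E E1 E2 x y \<Longrightarrow> \<not> (D v x \<and> D v y)"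
    using pf by blast
  show False
    apply (rule K33_sat[of D "(g0,h0)" "(g1,h2)" "(g2,h1)" "(g2,h2)" "(g0,h1)" "(g1,h0)"])
    apply (rule oE, simp add: dprod_E_def t1 t2 e1 e2)+
    apply (rule cl, simp add: dprod_V_def m1 m2, simp add: d1 d2, simp add: dprod_E_def n1 n2)+
    done
qed

lemma arith_case:
  fixes n1 n2 a1 a2 :: nat
  assumes "3 \<le> n1" "n1 \<le> n2" "2*(n1-1) \<le> a1" "2*(n2-1) \<le> a2" "a1*a2 \<le> 2*(n1*n2)"
  shows "n1 = 3 \<and> a1 = 4 \<and> ((n2 = 3 \<and> a2 = 4) \<or> (n2 = 4 \<and> a2 = 6))"
proof -
  have m: "(2*(n1-1)) * (2*(n2-1)) \<le> a1 * a2" using assms(3,4) by (rule mult_le_mono)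
  have n13: "n1 = 3"
  proof (rule ccontr)
    assume "n1 \<noteq> 3"
    then have "n1 \<ge> 4" using assms(1) by simp
    then obtain a b where ab: "n1 = a + 4" "n2 = b + 4" using assms(2)
      by (metis add.commute le_Suc_ex le_trans)
    have "(2*(n1-1)) * (2*(n2-1)) = 4*((a+3)*(b+3))" using ab by (simp add: algebra_simps)
    also have "\<dots> > 2*(n1*n2)" using ab by (simp add: algebra_simps)
    finally show False using m assms(5) by simp
  qed
  have n24: "n2 \<le> 4"
  proof (rule ccontr)
    assume "\<not> n2 \<le> 4"
    then have "5 \<le> n2" by simp
    then obtain b where b0: "n2 = 5 + b" using le_Suc_ex by blast
    then have b: "n2 = b + 5" by simp
    have "(2*(n1-1)) * (2*(n2-1)) = 8 * (b+4)" using n13 b by simp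
    also have "\<dots> > 2*(n1*n2)" using n13 b by simp
    finally show False using m assms(5) by simp
  qed
  have a14: "a1 \<ge> 4" using assms(3) n13 by simp
  have a24: "a2 \<ge> 4" using assms(4) assms(2) n13 by simp
  have u1: "a1 * 4 \<le> a1 * a2" using a24 by simp
  have u2: "4 * a2 \<le> a1 * a2" using a14 by simp
  show ?thesis
  proof (cases "n2 = 3")
    case True
    then have "a1 * a2 \<le> 18" using assms(5) n13 by simp
    then have "a1 \<le> 4" "a2 \<le> 4" using u1 u2 by linarith+
    then show ?thesis using True n13 a14 a24 by simp
  next
    case False
    then have n2: "n2 = 4" using n24 assms(1,2) n13 by simp
    then have "a2 \<ge> 6" using assms(4) by simp
    then have u3: "a1 * 6 \<le> a1 * a2" by simp
    have "a1 * a2 \<le> 24" using assms(5) n13 n2 by simp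
    then have "a1 \<le> 4" "a2 \<le> 6" using u3 u2 by linarith+
    then show ?thesis using n2 n13 a14 \<open>a2 \<ge> 6\<close> by simp
  qed
qed

lemma deg_le2:
  assumes g1: "graph V1 E1" and g2: "graph V2 E2"
    and D: "one_perfect (dprod_V V1 V2) (dprod_E E1 E2) D"
    and e: "E1 g1 g0" "E1 g1 g2" "g0 \<noteq> g2" and h: "h \<in> V2"
  shows "card {h'. E2 h h'} \<le> 2"
proof -
  have sym1: "\<And>x y. E1 x y \<Longrightarrow> E1 y x" and irr1: "\<And>x. \<not> E1 x x"
    and in1: "\<And>x y. E1 x y \<Longrightarrow> x \<in> V1 \<and> y \<in> V1" using g1 unfolding graph_def by auto
  have sym2: "\<And>x y. E2 x y \<Longrightarrow> E2 y x" using g2 unfolding graph_def by auto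
  have irr2: "\<And>x. \<not> E2 x x"
    and in2: "\<And>x y. E2 x y \<Longrightarrow> x \<in> V2 \<and> y \<in> V2" using g2 unfolding graph_def by auto
  have fin2: "finite V2" using g2 unfolding graph_def by auto
  define N where "N = {h'. E2 h h'}"
  have NV: "N \<subseteq> V2" unfolding N_def using in2 by blast
  have finN: "finite N" using NV fin2 finite_subset by blast
  define A where "A = {(g0,h),(g2,h)}"
  define B where "B = {g1} \<times> N"
  define S where "S = A \<union> B"
  have g10: "g1 \<noteq> g0" "g1 \<noteq> g2" using e irr1 by auto
  have gV: "g0 \<in> V1" "g1 \<in> V1" "g2 \<in> V1" using in1 e by blast+
  have SV: "S \<subseteq> dprod_V V1 V2" unfolding S_def A_def B_def dprod_V_def using gV h NV by auto
  have AB: "A \<inter> B = {}" unfolding A_def B_def using g10 by auto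
  have cls: "(x \<in> A) \<noteq> (y \<in> A)" if xS: "x \<in> S" and yS: "y \<in> S" and xy: "dprod_E E1 E2 x y" for x y
  proof -
    have E12: "E1 (fst x) (fst y)" "E2 (snd x) (snd y)" using xy unfolding dprod_E_def by auto
    show ?thesis
    proof
      assume "(x \<in> A) = (y \<in> A)"
      moreover have "x \<in> A \<or> x \<in> B" "y \<in> A \<or> y \<in> B" using xS yS unfolding S_def by auto
      ultimately consider "x \<in> A" "y \<in> A" | "x \<in> B" "y \<in> B" by blast
      then show False
      proof cases
        case 1 then have "snd x = h" "snd y = h" unfolding A_def by auto
        then show False using E12 irr2 by metis
      next
        case 2 then have "fst x = g1" "fst y = g1" unfolding B_def by auto
        then show False using E12 irr1 by metis
      qed
    qed
  qed
  have tf: "\<forall>x\<in>S. \<forall>y\<in>S. \<forall>z\<in>S. \<not>(dprod_E E1 E2 x y \<and> dprod_E E1 E2 y z \<and> dprod_E E1 E2 x z)"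
  proof (intro ballI notI)
    fix x y z assume "x \<in> S" "y \<in> S" "z \<in> S" and "dprod_E E1 E2 x y \<and> dprod_E E1 E2 y z \<and> dprod_E E1 E2 x z"
    then have "(x \<in> A) \<noteq> (y \<in> A)" "(y \<in> A) \<noteq> (z \<in> A)" "(x \<in> A) \<noteq> (z \<in> A)" using cls by blast+
    then show False by blast
  qed
  have c1: "card {(x,y). x\<in>S \<and> y\<in>S \<and> dprod_E E1 E2 x y} \<le> 2 * card S"
    by (rule count_tf[OF graph_dprod[OF g1 g2] D SV tf])
  have finA: "finite A" and finB: "finite B" unfolding A_def B_def using finN by auto
  have cA: "card A = 2" unfolding A_def using e(3) by simp
  have cB: "card B = card N" unfolding B_def by (simp add: card_cartesian_product)
  have cS: "card S = 2 + card N" unfolding S_def using card_Un_disjoint[OF finA finB AB] cA cB by simp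
  have sub: "A \<times> B \<union> B \<times> A \<subseteq> {(x,y). x\<in>S \<and> y\<in>S \<and> dprod_E E1 E2 x y}"
  proof
    fix p assume p: "p \<in> A \<times> B \<union> B \<times> A"
    have e01: "E1 g0 g1" "E1 g2 g1" using e sym1 by blast+
    from p show "p \<in> {(x,y). x\<in>S \<and> y\<in>S \<and> dprod_E E1 E2 x y}"
      unfolding S_def A_def B_def N_def dprod_E_def using e e01 sym2 by auto
  qed
  have finS: "finite S" unfolding S_def using finA finB by simp
  have "card (A \<times> B \<union> B \<times> A) = card (A \<times> B) + card (B \<times> A)"
    by (rule card_Un_disjoint) (use finA finB AB in auto)
  also have "\<dots> = 4 * card N" using cA cB by (simp add: card_cartesian_product)
  moreover have finArc: "finite {(x,y). x\<in>S \<and> y\<in>S \<and> dprod_E E1 E2 x y}"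
    by (rule finite_subset[of _ "S \<times> S"]) (auto simp: finS)
  ultimately have "4 * card N \<le> card {(x,y). x\<in>S \<and> y\<in>S \<and> dprod_E E1 E2 x y}"
    using card_mono[OF finArc sub] by simp
  then show ?thesis using c1 cS unfolding N_def by simp
qed

lemma global_count:
  assumes g1: "graph V1 E1" and g2: "graph V2 E2"
    and D: "one_perfect (dprod_V V1 V2) (dprod_E E1 E2) D"
    and nt: "(\<forall>a b c. \<not> (E1 a b \<and> E1 b c \<and> E1 a c)) \<or> (\<forall>a b c. \<not> (E2 a b \<and> E2 b c \<and> E2 a c))"
  shows "card {(a,b). E1 a b} * card {(a,b). E2 a b} \<le> 2 * (card V1 * card V2)"
proof -
  have g: "graph (dprod_V V1 V2) (dprod_E E1 E2)" by (rule graph_dprod[OF g1 g2])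
  have tf: "\<forall>x\<in>dprod_V V1 V2. \<forall>y\<in>dprod_V V1 V2. \<forall>z\<in>dprod_V V1 V2.
      \<not>(dprod_E E1 E2 x y \<and> dprod_E E1 E2 y z \<and> dprod_E E1 E2 x z)"
    using nt unfolding dprod_E_def by blast
  have "card {(x,y). x \<in> dprod_V V1 V2 \<and> y \<in> dprod_V V1 V2 \<and> dprod_E E1 E2 x y} \<le> 2 * card (dprod_V V1 V2)"
    by (rule count_tf[OF g D subset_refl tf])
  then show ?thesis using arcs_in[OF g] prod_arcs[of E1 E2]
    by (simp add: dprod_V_def card_cartesian_product)
qed

lemma path_iso_list:
  assumes d: "distinct xs" and s: "set xs = V" and l: "length xs = n"
    and e: "\<forall>i<n. \<forall>j<n. E (xs!i) (xs!j) \<longleftrightarrow> (i+1=j \<or> j+1=i)"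
  shows "graph_iso V E (path_V n) (path_E n)"
proof -
  have b: "bij_betw ((!) xs) {..<n} V" using bij_betw_nth[OF d] s l by simp
  define f where "f = the_inv_into {..<n} ((!) xs)"
  have bf: "bij_betw f V {..<n}" unfolding f_def by (rule bij_betw_the_inv_into[OF b])
  have fx: "\<And>x. x \<in> V \<Longrightarrow> xs ! (f x) = x \<and> f x < n"
    using b bf unfolding f_def by (auto simp: f_the_inv_into_f_bij_betw bij_betw_def)
  have "bij_betw f V (path_V n)" using bf unfolding path_V_def by (simp add: lessThan_atLeast0)
  moreover have "\<forall>x\<in>V. \<forall>y\<in>V. E x y \<longleftrightarrow> path_E n (f x) (f y)"
  proof (intro ballI)
    fix x y assume "x \<in> V" "y \<in> V"
    then have "xs ! (f x) = x" "f x < n" "xs ! (f y) = y" "f y < n" using fx by auto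
    moreover have "E (xs ! f x) (xs ! f y) \<longleftrightarrow> (f x + 1 = f y \<or> f y + 1 = f x)"
      using e \<open>f x < n\<close> \<open>f y < n\<close> by blast
    ultimately show "E x y \<longleftrightarrow> path_E n (f x) (f y)" unfolding path_E_def by simp
  qed
  ultimately show ?thesis unfolding graph_iso_def by blast
qed

lemma P3_expl:
  assumes g: "graph V E" and V: "V = {a,b,c}" and d: "a \<noteq> b" "b \<noteq> c" "a \<noteq> c"
    and e: "E a b" "E b c" "\<not> E a c"
  shows "graph_iso V E (path_V 3) (path_E 3)"
proof (rule path_iso_list[of "[a,b,c]"])
  have sym: "\<And>x y. E x y \<Longrightarrow> E y x" and irr: "\<And>x. \<not> E x x" using g unfolding graph_def by auto
  have f: "E b a" "E c b" "\<not> E c a" "\<not> E a a" "\<not> E b b" "\<not> E c c" using e sym irr by blast+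
  show "\<forall>i<3. \<forall>j<3. E ([a,b,c]!i) ([a,b,c]!j) \<longleftrightarrow> (i+1=j \<or> j+1=i)"
    unfolding numeral_3_eq_3 using e f by (auto simp: less_Suc_eq)
qed (use V d in auto)

lemma P4_expl:
  assumes g: "graph V E" and V: "V = {a,b,c,d}" and d: "distinct [a,b,c,d]"
    and e: "E a b" "E b c" "E c d" "\<not> E a c" "\<not> E a d" "\<not> E b d"
  shows "graph_iso V E (path_V 4) (path_E 4)"
proof (rule path_iso_list[of "[a,b,c,d]"])
  have sym: "\<And>x y. E x y \<Longrightarrow> E y x" and irr: "\<And>x. \<not> E x x" using g unfolding graph_def by auto
  have f: "E b a" "E c b" "E d c" "\<not> E c a" "\<not> E d a" "\<not> E d b"
    "\<not> E a a" "\<not> E b b" "\<not> E c c" "\<not> E d d" using e sym irr by blast+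
  show "\<forall>i<4. \<forall>j<4. E ([a,b,c,d]!i) ([a,b,c,d]!j) \<longleftrightarrow> (i+1=j \<or> j+1=i)"
    using e f by (auto simp: less_Suc_eq numeral_eq_Suc)
qed (use V d in auto)

lemma arcs3:
  assumes g: "graph V E" and V: "V = {a,b,c}" and d: "a \<noteq> b" "b \<noteq> c" "a \<noteq> c"
  shows "card {(x,y). E x y} = 2 * (of_bool (E a b) + of_bool (E a c) + of_bool (E b c))"
proof -
  have sym: "\<And>x y. E x y \<Longrightarrow> E y x" and irr: "\<And>x. \<not> E x x"
    and inV: "\<And>x y. E x y \<Longrightarrow> x \<in> V \<and> y \<in> V" using g unfolding graph_def by auto
  have Esym: "\<And>x y. E x y = E y x" using sym by blast
  have eq: "{(x,y). E x y} = (if E a b then {(a,b),(b,a)} else {}) \<union>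
      (if E a c then {(a,c),(c,a)} else {}) \<union>
      (if E b c then {(b,c),(c,b)} else {})"
  proof (rule set_eqI)
    fix p :: "'a \<times> 'a" obtain x y where p: "p = (x,y)" by (cases p)
    show "p \<in> {(x,y). E x y} \<longleftrightarrow> p \<in> (if E a b then {(a,b),(b,a)} else {}) \<union>
      (if E a c then {(a,c),(c,a)} else {}) \<union>
      (if E b c then {(b,c),(c,b)} else {})"
      unfolding p using inV[of x y] V Esym[of b a] Esym[of c a] Esym[of c b] irr[of a] irr[of b] irr[of c] by auto
  qed
  show ?thesis unfolding eq using d
    by (cases "E a b"; cases "E a c"; cases "E b c") (simp_all add: card_insert_if)
qed

lemma arcs4:
  assumes g: "graph V E" and V: "V = {a,b,c,d}" and dd: "distinct [a,b,c,d]"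
  shows "card {(x,y). E x y} = 2 * (of_bool (E a b) + of_bool (E a c) + of_bool (E a d) + of_bool (E b c) + of_bool (E b d) + of_bool (E c d))"
proof -
  have sym: "\<And>x y. E x y \<Longrightarrow> E y x" and irr: "\<And>x. \<not> E x x"
    and inV: "\<And>x y. E x y \<Longrightarrow> x \<in> V \<and> y \<in> V" using g unfolding graph_def by auto
  have Esym: "\<And>x y. E x y = E y x" using sym by blast
  have dist: "a\<noteq>b" "a\<noteq>c" "a\<noteq>d" "b\<noteq>c" "b\<noteq>d" "c\<noteq>d" "b\<noteq>a" "c\<noteq>a" "d\<noteq>a" "c\<noteq>b" "d\<noteq>b" "d\<noteq>c"
    using dd by auto
  have eq: "{(x,y). E x y} = {p. (E a b \<and> p \<in> {(a,b),(b,a)}) \<or> (E a c \<and> p \<in> {(a,c),(c,a)}) \<or>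
     (E a d \<and> p \<in> {(a,d),(d,a)}) \<or> (E b c \<and> p \<in> {(b,c),(c,b)}) \<or> (E b d \<and> p \<in> {(b,d),(d,b)}) \<or>
     (E c d \<and> p \<in> {(c,d),(d,c)})}"
  proof (rule set_eqI)
    fix p :: "'a \<times> 'a" obtain x y where p: "p = (x,y)" by (cases p)
    have s: "E b a = E a b" "E c a = E a c" "E d a = E a d" "E c b = E b c" "E d b = E b d" "E d c = E c d"
      using Esym by blast+
    have i: "\<not> E a a" "\<not> E b b" "\<not> E c c" "\<not> E d d" using irr by blast+
    have "E x y \<longleftrightarrow> (E a b \<and> (x,y) \<in> {(a,b),(b,a)}) \<or> (E a c \<and> (x,y) \<in> {(a,c),(c,a)}) \<or>
     (E a d \<and> (x,y) \<in> {(a,d),(d,a)}) \<or> (E b c \<and> (x,y) \<in> {(b,c),(c,b)}) \<or> (E b d \<and> (x,y) \<in> {(b,d),(d,b)}) \<or>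
     (E c d \<and> (x,y) \<in> {(c,d),(d,c)})"
    proof
      assume e: "E x y"
      then have "x \<in> {a,b,c,d}" "y \<in> {a,b,c,d}" using inV V by auto
      then show "(E a b \<and> (x,y) \<in> {(a,b),(b,a)}) \<or> (E a c \<and> (x,y) \<in> {(a,c),(c,a)}) \<or>
     (E a d \<and> (x,y) \<in> {(a,d),(d,a)}) \<or> (E b c \<and> (x,y) \<in> {(b,c),(c,b)}) \<or> (E b d \<and> (x,y) \<in> {(b,d),(d,b)}) \<or>
     (E c d \<and> (x,y) \<in> {(c,d),(d,c)})" using e s i by auto
    next
      assume "(E a b \<and> (x,y) \<in> {(a,b),(b,a)}) \<or> (E a c \<and> (x,y) \<in> {(a,c),(c,a)}) \<or>
     (E a d \<and> (x,y) \<in> {(a,d),(d,a)}) \<or> (E b c \<and> (x,y) \<in> {(b,c),(c,b)}) \<or> (E b d \<and> (x,y) \<in> {(b,d),(d,b)}) \<or>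
     (E c d \<and> (x,y) \<in> {(c,d),(d,c)})"
      then show "E x y" using s by auto
    qed
    then show "p \<in> {(x,y). E x y} \<longleftrightarrow> p \<in> {p. (E a b \<and> p \<in> {(a,b),(b,a)}) \<or> (E a c \<and> p \<in> {(a,c),(c,a)}) \<or>
     (E a d \<and> p \<in> {(a,d),(d,a)}) \<or> (E b c \<and> p \<in> {(b,c),(c,b)}) \<or> (E b d \<and> p \<in> {(b,d),(d,b)}) \<or>
     (E c d \<and> p \<in> {(c,d),(d,c)})}" unfolding p by simp
  qed
  show ?thesis unfolding eq
    by (cases "E a b"; cases "E a c"; cases "E a d"; cases "E b c"; cases "E b d"; cases "E c d")
       (simp_all add: card_insert_if dist Collect_disj_eq)
qed


lemma P4_bool:
  assumes "of_bool (E a b) + of_bool (E a c) + of_bool (E a d) + of_bool (E b c) + of_bool (E b d) + of_bool (E c d) = (3::nat)"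
    and "\<not> (E a b \<and> E a c \<and> E a d)"
    and "\<not> (E a b \<and> E b c \<and> E b d)"
    and "\<not> (E a c \<and> E b c \<and> E c d)"
    and "\<not> (E a d \<and> E b d \<and> E c d)"
    and "(E a b \<or> E a c \<or> E a d)"
    and "(E a b \<or> E b c \<or> E b d)"
    and "(E a c \<or> E b c \<or> E c d)"
    and "(E a d \<or> E b d \<or> E c d)"
  shows "(E a b \<and> E b c \<and> E c d \<and> \<not> E a c \<and> \<not> E a d \<and> \<not> E b d) \<or>
      (E a b \<and> E b d \<and> E c d \<and> \<not> E a d \<and> \<not> E a c \<and> \<not> E b c) \<or>
      (E a c \<and> E b c \<and> E b d \<and> \<not> E a b \<and> \<not> E a d \<and> \<not> E c d) \<or>
      (E a c \<and> E c d \<and> E b d \<and> \<not> E a d \<and> \<not> E a b \<and> \<not> E b c) \<or>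
      (E a d \<and> E b d \<and> E b c \<and> \<not> E a b \<and> \<not> E a c \<and> \<not> E c d) \<or>
      (E a d \<and> E c d \<and> E b c \<and> \<not> E a c \<and> \<not> E a b \<and> \<not> E b d) \<or>
      (E a b \<and> E a c \<and> E c d \<and> \<not> E b c \<and> \<not> E b d \<and> \<not> E a d) \<or>
      (E a b \<and> E a d \<and> E c d \<and> \<not> E b d \<and> \<not> E b c \<and> \<not> E a c) \<or>
      (E b c \<and> E a c \<and> E a d \<and> \<not> E a b \<and> \<not> E b d \<and> \<not> E c d) \<or>
      (E b d \<and> E a d \<and> E a c \<and> \<not> E a b \<and> \<not> E b c \<and> \<not> E c d) \<or>
      (E a c \<and> E a b \<and> E b d \<and> \<not> E b c \<and> \<not> E c d \<and> \<not> E a d) \<or>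
      (E b c \<and> E a b \<and> E a d \<and> \<not> E a c \<and> \<not> E c d \<and> \<not> E b d)"
  using assms by (cases "E a b"; cases "E a c"; cases "E a d"; cases "E b c"; cases "E b d"; cases "E c d") simp_all

lemma class3:
  assumes g: "graph V E" and c: "card V = 3" and a: "card {(x,y). E x y} = 4"
  shows "graph_iso V E (path_V 3) (path_E 3) \<and> (\<exists>u v w. E v u \<and> E v w \<and> u \<noteq> w)"
proof -
  obtain x y z where V: "V = {x,y,z}" and d: "x \<noteq> y" "y \<noteq> z" "x \<noteq> z" using c card_3_iff by metis
  have sym: "\<And>p q. E p q \<Longrightarrow> E q p" using g unfolding graph_def by auto
  have sum: "of_bool (E x y) + of_bool (E x z) + of_bool (E y z) = (2::nat)"
    using arcs3[OF g V d] a by simp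
  consider "E x y" "E x z" "\<not> E y z" | "E x y" "E y z" "\<not> E x z" | "E x z" "E y z" "\<not> E x y"
    using sum by (cases "E x y"; cases "E x z"; cases "E y z") simp_all
  then show ?thesis
  proof cases
    case 1
    have "V = {y,x,z}" using V by auto
    from P3_expl[OF g this _ _ _ sym[OF 1(1)] 1(2) 1(3)] d have "graph_iso V E (path_V 3) (path_E 3)" by auto
    then show ?thesis using 1 d by blast
  next
    case 2
    from P3_expl[OF g V d 2(1) 2(2) 2(3)] have "graph_iso V E (path_V 3) (path_E 3)" .
    then show ?thesis using 2 d sym by blast
  next
    case 3
    have "V = {x,z,y}" using V by auto
    from P3_expl[OF g this _ _ _ 3(1) sym[OF 3(2)] 3(3)] d have "graph_iso V E (path_V 3) (path_E 3)" by auto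
    then show ?thesis using 3 d sym by blast
  qed
qed

lemma deg3_contra:
  assumes g: "graph V E" and deg: "card {w. E v w} \<le> 2" and e: "E v p" "E v q" "E v r"
    and d: "p \<noteq> q" "p \<noteq> r" "q \<noteq> r"
  shows False
proof -
  have fin: "finite {w. E v w}" using g unfolding graph_def
    by (metis (no_types, lifting) finite_subset mem_Collect_eq subsetI)
  have "{p,q,r} \<subseteq> {w. E v w}" using e by auto
  then have "card {p,q,r} \<le> card {w. E v w}" by (rule card_mono[OF fin])
  then show False using deg d by simp
qed

lemma conn_nbr:
  assumes g: "graph V E" and con: "connected_graph V E" and v: "v \<in> V" and u: "u \<in> V" "u \<noteq> v"
  shows "\<exists>w. E v w"
proof -
  have "E\<^sup>*\<^sup>* v u" using con v u unfolding connected_graph_def by blast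
  then show ?thesis using u(2) by (metis converse_rtranclpE)
qed

lemma class4:
  assumes g: "graph V E" and con: "connected_graph V E" and c: "card V = 4"
    and ar: "card {(x,y). E x y} = 6" and deg: "\<forall>v\<in>V. card {w. E v w} \<le> 2"
  shows "graph_iso V E (path_V 4) (path_E 4)"
proof -
  have finV: "finite V" using g unfolding graph_def by auto
  obtain a where aV: "a \<in> V" using c by fastforce
  have "card (V - {a}) = 3" using c aV finV by simp
  then obtain b c' d where V': "V - {a} = {b,c',d}" and d0: "b \<noteq> c'" "c' \<noteq> d" "b \<noteq> d" using card_3_iff by metis
  have V: "V = {a,b,c',d}" using V' aV by blast
  have dd: "distinct [a,b,c',d]" using V' d0 by auto
  have sym: "\<And>p q. E p q \<Longrightarrow> E q p" and irr: "\<And>p. \<not> E p p"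
    and inV: "\<And>p q. E p q \<Longrightarrow> p \<in> V \<and> q \<in> V" using g unfolding graph_def by auto
  have s: "E b a = E a b" "E c' a = E a c'" "E d a = E a d" "E c' b = E b c'" "E d b = E b d" "E d c' = E c' d"
    using sym by blast+
  have sum: "of_bool (E a b) + of_bool (E a c') + of_bool (E a d) + of_bool (E b c') + of_bool (E b d) + of_bool (E c' d) = (3::nat)"
    using arcs4[OF g V dd] ar by simp
  have dg: "\<And>v p q r. v \<in> V \<Longrightarrow> E v p \<Longrightarrow> E v q \<Longrightarrow> E v r \<Longrightarrow> p \<noteq> q \<Longrightarrow> p \<noteq> r \<Longrightarrow> q \<noteq> r \<Longrightarrow> False"
    using deg3_contra[OF g] deg by blast
  have deg4: "\<not> (E a b \<and> E a c' \<and> E a d)" "\<not> (E a b \<and> E b c' \<and> E b d)"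
     "\<not> (E a c' \<and> E b c' \<and> E c' d)" "\<not> (E a d \<and> E b d \<and> E c' d)"
  proof -
    have vV: "a \<in> V" "b \<in> V" "c' \<in> V" "d \<in> V" using V by auto
    have dst: "a\<noteq>b" "a\<noteq>c'" "a\<noteq>d" "b\<noteq>c'" "b\<noteq>d" "c'\<noteq>d" using dd by auto
    show "\<not> (E a b \<and> E a c' \<and> E a d)" using dg[of a b c' d] vV dst by blast
    show "\<not> (E a b \<and> E b c' \<and> E b d)" using dg[of b a c' d] vV dst s by auto
    show "\<not> (E a c' \<and> E b c' \<and> E c' d)" using dg[of c' a b d] vV dst s by auto
    show "\<not> (E a d \<and> E b d \<and> E c' d)" using dg[of d a b c'] vV dst s by auto
  qed
  have nb: "\<And>v. v \<in> V \<Longrightarrow> \<exists>w. E v w"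
  proof -
    fix v assume v: "v \<in> V"
    obtain u where "u \<in> V" "u \<noteq> v" using V dd v by auto
    then show "\<exists>w. E v w" using conn_nbr[OF g con v] by blast
  qed
  have con4: "(E a b \<or> E a c' \<or> E a d)" "(E a b \<or> E b c' \<or> E b d)"
     "(E a c' \<or> E b c' \<or> E c' d)" "(E a d \<or> E b d \<or> E c' d)"
  proof -
    have nbr: "\<And>v. v \<in> V \<Longrightarrow> \<exists>w\<in>V. w \<noteq> v \<and> E v w"
    proof -
      fix v assume "v \<in> V" then obtain w where "E v w" using nb by blast
      moreover have "w \<in> V" using inV[OF \<open>E v w\<close>] by simp
      moreover have "w \<noteq> v" using irr[of v] \<open>E v w\<close> by auto
      ultimately show "\<exists>w\<in>V. w \<noteq> v \<and> E v w" by blast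
    qed
    show "(E a b \<or> E a c' \<or> E a d)" using nbr[of a] V by auto
    show "(E a b \<or> E b c' \<or> E b d)" using nbr[of b] V s by auto
    show "(E a c' \<or> E b c' \<or> E c' d)" using nbr[of c'] V s by auto
    show "(E a d \<or> E b d \<or> E c' d)" using nbr[of d] V s by auto
  qed
  show ?thesis
  proof -

    from P4_bool[of E a b c' d, OF sum deg4 con4] show ?thesis
    proof (elim disjE)
    assume C: "(E a b \<and> E b c' \<and> E c' d \<and> \<not> E a c' \<and> \<not> E a d \<and> \<not> E b d)"
    show ?thesis
      apply (rule P4_expl[OF g, of a b c' d])
      subgoal using V by auto
      subgoal using dd by auto
      using C s by simp_all
    next assume C: "(E a b \<and> E b d \<and> E c' d \<and> \<not> E a d \<and> \<not> E a c' \<and> \<not> E b c')"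
    show ?thesis
      apply (rule P4_expl[OF g, of a b d c'])
      subgoal using V by auto
      subgoal using dd by auto
      using C s by simp_all
    next assume C: "(E a c' \<and> E b c' \<and> E b d \<and> \<not> E a b \<and> \<not> E a d \<and> \<not> E c' d)"
    show ?thesis
      apply (rule P4_expl[OF g, of a c' b d])
      subgoal using V by auto
      subgoal using dd by auto
      using C s by simp_all
    next assume C: "(E a c' \<and> E c' d \<and> E b d \<and> \<not> E a d \<and> \<not> E a b \<and> \<not> E b c')"
    show ?thesis
      apply (rule P4_expl[OF g, of a c' d b])
      subgoal using V by auto
      subgoal using dd by auto
      using C s by simp_all
    next assume C: "(E a d \<and> E b d \<and> E b c' \<and> \<not> E a b \<and> \<not> E a c' \<and> \<not> E c' d)"
    show ?thesis
      apply (rule P4_expl[OF g, of a d b c'])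
      subgoal using V by auto
      subgoal using dd by auto
      using C s by simp_all
    next assume C: "(E a d \<and> E c' d \<and> E b c' \<and> \<not> E a c' \<and> \<not> E a b \<and> \<not> E b d)"
    show ?thesis
      apply (rule P4_expl[OF g, of a d c' b])
      subgoal using V by auto
      subgoal using dd by auto
      using C s by simp_all
    next assume C: "(E a b \<and> E a c' \<and> E c' d \<and> \<not> E b c' \<and> \<not> E b d \<and> \<not> E a d)"
    show ?thesis
      apply (rule P4_expl[OF g, of b a c' d])
      subgoal using V by auto
      subgoal using dd by auto
      using C s by simp_all
    next assume C: "(E a b \<and> E a d \<and> E c' d \<and> \<not> E b d \<and> \<not> E b c' \<and> \<not> E a c')"
    show ?thesis
      apply (rule P4_expl[OF g, of b a d c'])
      subgoal using V by auto
      subgoal using dd by auto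
      using C s by simp_all
    next assume C: "(E b c' \<and> E a c' \<and> E a d \<and> \<not> E a b \<and> \<not> E b d \<and> \<not> E c' d)"
    show ?thesis
      apply (rule P4_expl[OF g, of b c' a d])
      subgoal using V by auto
      subgoal using dd by auto
      using C s by simp_all
    next assume C: "(E b d \<and> E a d \<and> E a c' \<and> \<not> E a b \<and> \<not> E b c' \<and> \<not> E c' d)"
    show ?thesis
      apply (rule P4_expl[OF g, of b d a c'])
      subgoal using V by auto
      subgoal using dd by auto
      using C s by simp_all
    next assume C: "(E a c' \<and> E a b \<and> E b d \<and> \<not> E b c' \<and> \<not> E c' d \<and> \<not> E a d)"
    show ?thesis
      apply (rule P4_expl[OF g, of c' a b d])
      subgoal using V by auto
      subgoal using dd by auto
      using C s by simp_all
    next assume C: "(E b c' \<and> E a b \<and> E a d \<and> \<not> E a c' \<and> \<not> E c' d \<and> \<not> E b d)"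
    show ?thesis
      apply (rule P4_expl[OF g, of c' b a d])
      subgoal using V by auto
      subgoal using dd by auto
      using C s by simp_all
    qed
  qed
qed

lemma concrete_opo:
  fixes L :: "((nat \<times> nat) \<times> (nat \<times> nat)) list"
  assumes sub: "\<forall>(x,y)\<in>set L. dprod_E (path_E n) (path_E m) x y"
    and asym: "\<forall>(x,y)\<in>set L. (y,x) \<notin> set L"
    and cover: "\<forall>i<n. \<forall>j<m. \<forall>k<n. \<forall>l<m. (i+1=k \<or> k+1=i) \<and> (j+1=l \<or> l+1=j) \<longrightarrow>
                  ((i,j),(k,l)) \<in> set L \<or> ((k,l),(i,j)) \<in> set L"
    and dist: "distinct (map fst L)"
  shows "one_perfectly_orientable (dprod_V (path_V n) (path_V m)) (dprod_E (path_E n) (path_E m))"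
proof -
  have fn: "\<And>x y z. (x,y) \<in> set L \<Longrightarrow> (x,z) \<in> set L \<Longrightarrow> y = z"
  proof -
    fix x y z assume a: "(x,y) \<in> set L" "(x,z) \<in> set L"
    have "inj_on fst (set L)" using dist by (simp add: distinct_map)
    then show "y = z" using a unfolding inj_on_def by force
  qed
  have cov: "\<And>x y. dprod_E (path_E n) (path_E m) x y \<Longrightarrow> (x,y) \<in> set L \<or> (y,x) \<in> set L"
  proof -
    fix x y :: "nat \<times> nat"
    obtain i j k l where xy: "x = (i,j)" "y = (k,l)" by (cases x, cases y) auto
    assume "dprod_E (path_E n) (path_E m) x y"
    then have "i < n" "k < n" "j < m" "l < m" "i+1 = k \<or> k+1 = i" "j+1 = l \<or> l+1 = j"
      unfolding xy dprod_E_def path_E_def by auto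
    then show "(x,y) \<in> set L \<or> (y,x) \<in> set L" using cover unfolding xy by blast
  qed
  let ?D = "\<lambda>x y. (x,y) \<in> set L"
  have "one_perfect (dprod_V (path_V n) (path_V m)) (dprod_E (path_E n) (path_E m)) ?D"
    unfolding one_perfect_def orientation_def
  proof (intro conjI allI impI ballI)
    fix x y assume "(x,y) \<in> set L" then show "dprod_E (path_E n) (path_E m) x y" using sub by blast
  next
    fix x y assume "dprod_E (path_E n) (path_E m) x y" then show "((x,y) \<in> set L) = (\<not> (y,x) \<in> set L)"
      using cov asym by blast
  next
    fix v x y assume "(v,x) \<in> set L \<and> (v,y) \<in> set L \<and> x \<noteq> y" then show "dprod_E (path_E n) (path_E m) x y"
      using fn by blast
  qed
  then show ?thesis unfolding one_perfectly_orientable_def by blast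
qed

lemma P33_opo: "one_perfectly_orientable (dprod_V (path_V 3) (path_V 3)) (dprod_E (path_E 3) (path_E 3))"
  by (rule concrete_opo[where L = "[((0,0),(1,1)), ((0,1),(1,0)), ((1,2),(0,1)), ((0,2),(1,1)), ((1,0),(2,1)), ((1,1),(2,0)), ((2,2),(1,1)), ((2,1),(1,2))]"])
     (simp_all add: dprod_E_def path_E_def numeral_eq_Suc All_less_Suc)

lemma P34_opo: "one_perfectly_orientable (dprod_V (path_V 3) (path_V 4)) (dprod_E (path_E 3) (path_E 4))"
  by (rule concrete_opo[where L = "[((0,0),(1,1)), ((0,1),(1,0)), ((1,2),(0,1)), ((0,2),(1,1)), ((1,3),(0,2)), ((0,3),(1,2)), ((1,0),(2,1)), ((2,0),(1,1)), ((1,1),(2,2)), ((2,1),(1,2)), ((2,3),(1,2)), ((2,2),(1,3))]"])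
     (simp_all add: dprod_E_def path_E_def numeral_eq_Suc All_less_Suc)

lemma only_if_asym:
  assumes g1: "graph V1 E1" and c1: "connected_graph V1 E1" and n1: "card V1 \<ge> 2"
      and g2: "graph V2 E2" and c2: "connected_graph V2 E2" and n2: "card V2 \<ge> 2"
      and le: "card V1 \<le> card V2"
      and opo: "one_perfectly_orientable (dprod_V V1 V2) (dprod_E E1 E2)"
  shows "(graph_iso V1 E1 K2_V K2_E \<and> pseudotree V2 E2) \<or>
      (graph_iso V1 E1 (path_V 3) (path_E 3) \<and> graph_iso V2 E2 (path_V 4) (path_E 4)) \<or>
      (graph_iso V1 E1 (path_V 3) (path_E 3) \<and> graph_iso V2 E2 (path_V 3) (path_E 3))"
proof (cases "card V1 = 2")
  case True
  obtain p q where pq: "V1 = {p,q}" "p \<noteq> q" "E1 p q" using card2_K2[OF g1 c1 True] by blast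
  have "graph_iso V1 E1 K2_V K2_E" by (rule K2_to_iso[OF g1 pq])
  moreover have "pseudotree V2 E2" by (rule K2_only_if[OF g1 pq g2 c2 opo])
  ultimately show ?thesis by blast
next
  case False
  then have n13: "card V1 \<ge> 3" using n1 by simp
  obtain D where D: "one_perfect (dprod_V V1 V2) (dprod_E E1 E2) D"
    using opo unfolding one_perfectly_orientable_def by blast
  have nt: "(\<forall>a b c. \<not> (E1 a b \<and> E1 b c \<and> E1 a c)) \<or> (\<forall>a b c. \<not> (E2 a b \<and> E2 b c \<and> E2 a c))"
  proof (rule ccontr)
    assume "\<not> ?thesis"
    then obtain a b c a' b' c' where t: "E1 a b" "E1 b c" "E1 a c" "E2 a' b'" "E2 b' c'" "E2 a' c'" by blast
    show False by (rule K33_obstr[OF g1 g2 D t(1) t(3) t(2) t(4) t(6) t(5)])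
  qed
  have gc: "card {(a,b). E1 a b} * card {(a,b). E2 a b} \<le> 2 * (card V1 * card V2)"
    by (rule global_count[OF g1 g2 D nt])
  have ne1: "V1 \<noteq> {}" and ne2: "V2 \<noteq> {}" using n1 n2 by auto
  have a1: "2 * (card V1 - 1) \<le> card {(x,y). E1 x y}" by (rule conn_arcs[OF g1 c1 ne1])
  have a2: "2 * (card V2 - 1) \<le> card {(x,y). E2 x y}" by (rule conn_arcs[OF g2 c2 ne2])
  have ar: "card V1 = 3 \<and> card {(x,y). E1 x y} = 4 \<and>
     ((card V2 = 3 \<and> card {(x,y). E2 x y} = 4) \<or> (card V2 = 4 \<and> card {(x,y). E2 x y} = 6))"
    by (rule arith_case[OF n13 le a1 a2 gc])
  obtain u v w where P3: "graph_iso V1 E1 (path_V 3) (path_E 3)" and uvw: "E1 v u" "E1 v w" "u \<noteq> w"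
    using class3[OF g1] ar by blast
  from ar show ?thesis
  proof (elim conjE disjE)
    assume "card V2 = 3" "card {(x,y). E2 x y} = 4"
    then have "graph_iso V2 E2 (path_V 3) (path_E 3)" using class3[OF g2] by blast
    then show ?thesis using P3 by blast
  next
    assume h: "card V2 = 4" "card {(x,y). E2 x y} = 6"
    have "\<forall>h\<in>V2. card {h'. E2 h h'} \<le> 2" using deg_le2[OF g1 g2 D uvw] by blast
    then have "graph_iso V2 E2 (path_V 4) (path_E 4)" using class4[OF g2 c2 h] by blast
    then show ?thesis using P3 by blast
  qed
qed

theorem proposition10:
  fixes V1 :: "'a set" and E1 :: "'a \<Rightarrow> 'a \<Rightarrow> bool"
    and V2 :: "'b set" and E2 :: "'b \<Rightarrow> 'b \<Rightarrow> bool"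
  assumes "graph V1 E1" and "connected_graph V1 E1" and "card V1 \<ge> 2"
      and "graph V2 E2" and "connected_graph V2 E2" and "card V2 \<ge> 2"
  shows "one_perfectly_orientable (dprod_V V1 V2) (dprod_E E1 E2) \<longleftrightarrow>
     ((graph_iso V1 E1 K2_V K2_E \<and> pseudotree V2 E2) \<or>
      (graph_iso V2 E2 K2_V K2_E \<and> pseudotree V1 E1) \<or>
      (graph_iso V1 E1 (path_V 3) (path_E 3) \<and> graph_iso V2 E2 (path_V 4) (path_E 4)) \<or>
      (graph_iso V2 E2 (path_V 3) (path_E 3) \<and> graph_iso V1 E1 (path_V 4) (path_E 4)) \<or>
      (graph_iso V1 E1 (path_V 3) (path_E 3) \<and> graph_iso V2 E2 (path_V 3) (path_E 3)))"
proof
  assume opo: "one_perfectly_orientable (dprod_V V1 V2) (dprod_E E1 E2)"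
  show "(graph_iso V1 E1 K2_V K2_E \<and> pseudotree V2 E2) \<or>
      (graph_iso V2 E2 K2_V K2_E \<and> pseudotree V1 E1) \<or>
      (graph_iso V1 E1 (path_V 3) (path_E 3) \<and> graph_iso V2 E2 (path_V 4) (path_E 4)) \<or>
      (graph_iso V2 E2 (path_V 3) (path_E 3) \<and> graph_iso V1 E1 (path_V 4) (path_E 4)) \<or>
      (graph_iso V1 E1 (path_V 3) (path_E 3) \<and> graph_iso V2 E2 (path_V 3) (path_E 3))"
  proof (cases "card V1 \<le> card V2")
    case True
    from only_if_asym[OF assms True opo] show ?thesis by blast
  next
    case False
    then have le: "card V2 \<le> card V1" by simp
    from only_if_asym[OF assms(4,5,6,1,2,3) le opo_swap[OF opo]] show ?thesis by blast
  qed
next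
  assume h: "(graph_iso V1 E1 K2_V K2_E \<and> pseudotree V2 E2) \<or>
      (graph_iso V2 E2 K2_V K2_E \<and> pseudotree V1 E1) \<or>
      (graph_iso V1 E1 (path_V 3) (path_E 3) \<and> graph_iso V2 E2 (path_V 4) (path_E 4)) \<or>
      (graph_iso V2 E2 (path_V 3) (path_E 3) \<and> graph_iso V1 E1 (path_V 4) (path_E 4)) \<or>
      (graph_iso V1 E1 (path_V 3) (path_E 3) \<and> graph_iso V2 E2 (path_V 3) (path_E 3))"
  have g1: "graph V1 E1" and g2: "graph V2 E2" using assms by auto
  from h show "one_perfectly_orientable (dprod_V V1 V2) (dprod_E E1 E2)"
  proof (elim disjE conjE)
    assume i: "graph_iso V1 E1 K2_V K2_E" and p: "pseudotree V2 E2"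
    obtain a b where "V1 = {a,b}" using K2_from_iso[OF i] by blast
    moreover obtain D where "orientation V2 E2 D" "outdeg1 D" using pseudo_orient[OF g2 p] by blast
    ultimately show ?thesis using K2_if[OF _ g1 g2] by blast
  next
    assume i: "graph_iso V2 E2 K2_V K2_E" and p: "pseudotree V1 E1"
    obtain a b where "V2 = {a,b}" using K2_from_iso[OF i] by blast
    moreover obtain D where "orientation V1 E1 D" "outdeg1 D" using pseudo_orient[OF g1 p] by blast
    ultimately have "one_perfectly_orientable (dprod_V V2 V1) (dprod_E E2 E1)" using K2_if[OF _ g2 g1] by blast
    then show ?thesis by (rule opo_swap)
  next
    assume "graph_iso V1 E1 (path_V 3) (path_E 3)" "graph_iso V2 E2 (path_V 4) (path_E 4)"
    then show ?thesis using opo_iso[OF _ _ g1 g2 P34_opo] by blast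
  next
    assume "graph_iso V2 E2 (path_V 3) (path_E 3)" "graph_iso V1 E1 (path_V 4) (path_E 4)"
    then have "one_perfectly_orientable (dprod_V V2 V1) (dprod_E E2 E1)" using opo_iso[OF _ _ g2 g1 P34_opo] by blast
    then show ?thesis by (rule opo_swap)
  next
    assume "graph_iso V1 E1 (path_V 3) (path_E 3)" "graph_iso V2 E2 (path_V 3) (path_E 3)"
    then show ?thesis using opo_iso[OF _ _ g1 g2 P33_opo] by blast
  qed
qed

end
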